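(* No graph of the form $G_6\star G_3$ (with $G_6$ any graph on $6$ vertices and $G_3$ any graph on $3$ vertices) is $3$-ball packable, except $C_6\star C_3$.
   Context: $C_n$ is the cycle on $n$ vertices ($C_3=K_3$), $\star$ the graph join. A $3$-ball in $\hat{\mathbb R}^3$ is a closed ball, closed exterior of an open ball with $\infty$, or a closed half-space with $\infty$; a $3$-ball packing is a collection of $3$-balls with disjoint interiors; its tangency graph joins balls meeting in exactly one point; a graph is $3$-ball packable if isomorphic to the tangency graph of some $3$-ball packing. *)

theory Defs
  imports "HOL-Analysis.Analysis"
begin

definition simple_graph :: "'v set \<Rightarrow> ('v \<Rightarrow> 'v \<Rightarrow> bool) \<Rightarrow> bool" where
  "simple_graph V E \<longleftrightarrow> finite V \<and>
     (\<forall>x y. E x y \<longrightarrow> x \<in> V \<and> y \<in> V \<and> x \<noteq> y) \<and> (\<forall>x y. E x y \<longrightarrow> E y x)"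

definition graph_iso :: "'v set \<Rightarrow> ('v \<Rightarrow> 'v \<Rightarrow> bool) \<Rightarrow> 'w set \<Rightarrow> ('w \<Rightarrow> 'w \<Rightarrow> bool) \<Rightarrow> bool" where
  "graph_iso V E W F \<longleftrightarrow> (\<exists>f. bij_betw f V W \<and> (\<forall>x\<in>V. \<forall>y\<in>V. E x y \<longleftrightarrow> F (f x) (f y)))"

definition join_verts :: "'a set \<Rightarrow> 'b set \<Rightarrow> ('a + 'b) set" where
  "join_verts V W = Inl ` V \<union> Inr ` W"

fun join_edges :: "'a set \<Rightarrow> ('a \<Rightarrow> 'a \<Rightarrow> bool) \<Rightarrow> 'b set \<Rightarrow> ('b \<Rightarrow> 'b \<Rightarrow> bool)
    \<Rightarrow> ('a + 'b) \<Rightarrow> ('a + 'b) \<Rightarrow> bool" where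
  "join_edges V E W F (Inl x) (Inl y) = E x y"
| "join_edges V E W F (Inr x) (Inr y) = F x y"
| "join_edges V E W F (Inl x) (Inr y) = (x \<in> V \<and> y \<in> W)"
| "join_edges V E W F (Inr x) (Inl y) = (x \<in> W \<and> y \<in> V)"

text \<open>The cycle C_n on vertices 0..n-1 (for n = 3 this is K_3).\<close>

definition cycle_verts :: "nat \<Rightarrow> nat set" where
  "cycle_verts n = {0..<n}"

definition cycle_edges :: "nat \<Rightarrow> nat \<Rightarrow> nat \<Rightarrow> bool" where
  "cycle_edges n x y \<longleftrightarrow> x < n \<and> y < n \<and> x \<noteq> y \<and> (y = Suc x mod n \<or> x = Suc y mod n)"

text \<open>Points of the one-point compactification: Some x for x in R^3, None for \<infinity>.\<close>

type_synonym xpoint = "(real ^ 3) option"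

datatype ball3 =
    Ball "real ^ 3" real
  | CoBall "real ^ 3" real      \<comment> \<open>closed exterior of an open ball, together with \<infinity>\<close>
  | Half "real ^ 3" real        \<comment> \<open>closed half-space {x. a \<bullet> x \<le> b}, together with \<infinity>\<close>

definition valid_ball :: "ball3 \<Rightarrow> bool" where
  "valid_ball B = (case B of Ball c r \<Rightarrow> r > 0 | CoBall c r \<Rightarrow> r > 0 | Half a b \<Rightarrow> a \<noteq> 0)"

fun ball_set :: "ball3 \<Rightarrow> xpoint set" where
  "ball_set (Ball c r) = Some ` cball c r"
| "ball_set (CoBall c r) = Some ` {x. dist x c \<ge> r} \<union> {None}"
| "ball_set (Half a b) = Some ` {x. a \<bullet> x \<le> b} \<union> {None}"

text \<open>Interior in the topology of the one-point compactification of R^3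
  (\<infinity> is an interior point of a ball exterior, but not of a half-space).\<close>

fun ball_interior :: "ball3 \<Rightarrow> xpoint set" where
  "ball_interior (Ball c r) = Some ` ball c r"
| "ball_interior (CoBall c r) = Some ` {x. dist x c > r} \<union> {None}"
| "ball_interior (Half a b) = Some ` {x. a \<bullet> x < b}"

definition tangent :: "ball3 \<Rightarrow> ball3 \<Rightarrow> bool" where
  "tangent B C \<longleftrightarrow> (\<exists>p. ball_set B \<inter> ball_set C = {p})"

text \<open>A graph is 3-ball packable if it is isomorphic to the tangency graph of a
  3-ball packing; equivalently, its vertices can be assigned pairwise distinct
  3-balls with pairwise disjoint interiors such that adjacency is tangency.\<close>

definition ball_packable :: "'v set \<Rightarrow> ('v \<Rightarrow> 'v \<Rightarrow> bool) \<Rightarrow> bool" where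
  "ball_packable V E \<longleftrightarrow> (\<exists>f :: 'v \<Rightarrow> ball3.
      (\<forall>v\<in>V. valid_ball (f v)) \<and>
      inj_on (\<lambda>v. ball_set (f v)) V \<and>
      (\<forall>v\<in>V. \<forall>w\<in>V. v \<noteq> w \<longrightarrow> ball_interior (f v) \<inter> ball_interior (f w) = {}) \<and>
      (\<forall>v\<in>V. \<forall>w\<in>V. v \<noteq> w \<longrightarrow> (E v w \<longleftrightarrow> tangent (f v) (f w))))"

end

theory Submission
  imports Defs
begin

definition disj :: "ball3 \<Rightarrow> ball3 \<Rightarrow> bool" where
  "disj X Y \<longleftrightarrow> ball_interior X \<inter> ball_interior Y = {}"

lemma disj_sym: "disj X Y \<longleftrightarrow> disj Y X"
  unfolding disj_def by blast

lemma tangent_sym: "tangent X Y \<longleftrightarrow> tangent Y X"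
  unfolding tangent_def by (simp add: Int_commute)

lemma norm_eq_lemma:
  fixes A B :: "'a::real_inner"
  assumes "norm A \<le> r" "r + norm B \<le> norm (A + B)" "B \<noteq> 0"
  shows "A = (r / norm B) *\<^sub>R B"
proof -
  have tri: "norm (A + B) \<le> norm A + norm B" by (rule norm_triangle_ineq)
  have nA: "norm A = r" using assms tri by linarith
  have nAB: "norm (A + B) = r + norm B" using assms tri by linarith
  have nB: "norm B > 0" using assms by simp
  have "(norm (A + B))^2 = (norm A)^2 + 2 * inner A B + (norm B)^2"
    by (simp add: power2_norm_eq_inner inner_add_left inner_add_right inner_commute)
  then have AB: "inner A B = r * norm B" using nA nAB by (simp add: power2_eq_square algebra_simps)
  define k where "k = r / norm B"
  have "(norm (A - k *\<^sub>R B))^2 = inner (A - k *\<^sub>R B) (A - k *\<^sub>R B)"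
    by (simp add: power2_norm_eq_inner)
  also have "\<dots> = inner A A - 2 * k * inner A B + k^2 * inner B B"
    by (simp add: inner_diff_left inner_diff_right inner_commute power2_eq_square algebra_simps)
  also have "\<dots> = (norm A)^2 - 2 * k * inner A B + k^2 * (norm B)^2"
    by (simp add: power2_norm_eq_inner)
  also have "\<dots> = 0" using nA AB nB unfolding k_def by (simp add: power2_eq_square field_simps)
  finally have "A - k *\<^sub>R B = 0" by simp
  then show ?thesis unfolding k_def by simp
qed

lemma some_img_int: "Some ` S \<inter> Some ` T = Some ` (S \<inter> T)"
  by auto

lemma singleton_some: "(\<exists>p. Some ` S = {p}) \<longleftrightarrow> (\<exists>p. S = {p})"
proof
  assume "\<exists>p. Some ` S = {p}"
  then obtain p where p: "Some ` S = {p}" by blast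
  then obtain x where "x \<in> S" by auto
  have "y = x" if "y \<in> S" for y
  proof -
    have "Some y \<in> {p}" "Some x \<in> {p}" using p \<open>x \<in> S\<close> that by blast+
    then show ?thesis by auto
  qed
  then have "S = {x}" using \<open>x \<in> S\<close> by blast
  then show "\<exists>p. S = {p}" by blast
qed auto

lemma singleton_some_none: "(\<exists>p. Some ` S \<union> {None} = {p}) \<longleftrightarrow> S = {}"
proof
  assume "\<exists>p. Some ` S \<union> {None} = {p}"
  then obtain p where p: "Some ` S \<union> {None} = {p}" by blast
  then have "p = None" by auto
  then show "S = {}" using p by auto
qed auto

lemma singletonI2: "p \<in> S \<Longrightarrow> (\<And>x. x \<in> S \<Longrightarrow> x = p) \<Longrightarrow> \<exists>q. S = {q}"
  by blast

lemma BB_disj: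
  assumes "r1 > 0" "r2 > 0"
  shows "disj (Ball c1 r1) (Ball c2 r2) \<longleftrightarrow> r1 + r2 \<le> dist c1 c2"
proof
  assume "r1 + r2 \<le> dist c1 c2"
  then have "ball c1 r1 \<inter> ball c2 r2 = {}" by (rule disjoint_ballI)
  then show "disj (Ball c1 r1) (Ball c2 r2)" unfolding disj_def by (auto simp: some_img_int)
next
  assume d: "disj (Ball c1 r1) (Ball c2 r2)"
  show "r1 + r2 \<le> dist c1 c2"
  proof (rule ccontr)
    assume lt: "\<not> r1 + r2 \<le> dist c1 c2"
    define x where "x = c1 + (r1/(r1+r2)) *\<^sub>R (c2 - c1)"
    have "dist c1 x = (r1/(r1+r2)) * dist c1 c2"
      using assms by (simp add: x_def dist_norm norm_minus_commute)
    also have "\<dots> < (r1/(r1+r2)) * (r1+r2)"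
      by (rule mult_strict_left_mono) (use lt assms in auto)
    also have "\<dots> = r1" using assms by simp
    finally have x1: "x \<in> ball c1 r1" by simp
    have "x - c2 = (c1 - c2) - (r1/(r1+r2)) *\<^sub>R (c1 - c2)" by (simp add: x_def algebra_simps)
    also have "\<dots> = (1 - r1/(r1+r2)) *\<^sub>R (c1 - c2)" by (simp add: scaleR_diff_left)
    also have "1 - r1/(r1+r2) = r2/(r1+r2)" using assms by (simp add: field_simps)
    finally have "x - c2 = (r2/(r1+r2)) *\<^sub>R (c1 - c2)" .
    then have xe: "x - c2 = (r2/(r1+r2)) *\<^sub>R (c1 - c2)" .
    have "dist c2 x = norm (x - c2)" by (simp add: dist_norm norm_minus_commute)
    also have "\<dots> = norm ((r2/(r1+r2)) *\<^sub>R (c1 - c2))" by (simp only: xe)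
    also have "\<dots> = (r2/(r1+r2)) * dist c1 c2" using assms by (simp add: dist_norm)
    also have "\<dots> < (r2/(r1+r2)) * (r1+r2)"
      by (rule mult_strict_left_mono) (use lt assms in auto)
    also have "\<dots> = r2" using assms by simp
    finally have x2: "x \<in> ball c2 r2" by simp
    from d x1 x2 show False unfolding disj_def by (auto simp: some_img_int)
  qed
qed

lemma tangent_BB: "tangent (Ball c1 r1) (Ball c2 r2) \<longleftrightarrow> (\<exists>p. cball c1 r1 \<inter> cball c2 r2 = {p})"
  unfolding tangent_def by (simp add: some_img_int singleton_some)

lemma BB_tang:
  assumes r: "r1 > 0" "r2 > 0" and d: "r1 + r2 \<le> dist c1 c2"
  shows "tangent (Ball c1 r1) (Ball c2 r2) \<longleftrightarrow> dist c1 c2 = r1 + r2"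
proof
  assume t: "tangent (Ball c1 r1) (Ball c2 r2)"
  show "dist c1 c2 = r1 + r2"
  proof (rule ccontr)
    assume "dist c1 c2 \<noteq> r1 + r2"
    then have lt: "r1 + r2 < dist c1 c2" using d by simp
    have "cball c1 r1 \<inter> cball c2 r2 = {}"
    proof (rule ccontr)
      assume "cball c1 r1 \<inter> cball c2 r2 \<noteq> {}"
      then obtain x where "dist c1 x \<le> r1" "dist c2 x \<le> r2" by auto
      moreover have "dist c1 c2 \<le> dist c1 x + dist c2 x" by (rule dist_triangle2)
      ultimately show False using lt by linarith
    qed
    then show False using t tangent_BB by auto
  qed
next
  assume deq: "dist c1 c2 = r1 + r2"
  define p where "p = c1 + (r1/(r1+r2)) *\<^sub>R (c2 - c1)"
  have p1: "dist c1 p = r1"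
  proof -
    have "dist c1 p = (r1/(r1+r2)) * dist c1 c2"
      using r by (simp add: p_def dist_norm norm_minus_commute)
    then show ?thesis using deq r by simp
  qed
  have "p - c2 = (c1 - c2) - (r1/(r1+r2)) *\<^sub>R (c1 - c2)" by (simp add: p_def algebra_simps)
  also have "\<dots> = (1 - r1/(r1+r2)) *\<^sub>R (c1 - c2)" by (simp add: scaleR_diff_left)
  also have "1 - r1/(r1+r2) = r2/(r1+r2)" using r by (simp add: field_simps)
  finally have pe: "p - c2 = (r2/(r1+r2)) *\<^sub>R (c1 - c2)" .
  have "dist c2 p = norm (p - c2)" by (simp add: dist_norm norm_minus_commute)
  also have "\<dots> = norm ((r2/(r1+r2)) *\<^sub>R (c1 - c2))" by (simp only: pe)
  also have "\<dots> = (r2/(r1+r2)) * dist c1 c2" using r by (simp add: dist_norm)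
  also have "\<dots> = r2" using deq r by simp
  finally have p2: "dist c2 p = r2" .
  have uniq: "x = p" if x1: "dist c1 x \<le> r1" and x2: "dist c2 x \<le> r2" for x
  proof -
    define A where "A = c2 - x"
    define B where "B = x - c1"
    have nA: "norm A \<le> r2" using x2 by (simp add: A_def dist_norm)
    have nB: "norm B \<le> r1" using x1 by (simp add: B_def dist_norm norm_minus_commute)
    have AB: "A + B = c2 - c1" by (simp add: A_def B_def)
    have nAB: "norm (A + B) = r1 + r2" using deq by (simp add: AB dist_norm norm_minus_commute)
    have "norm (A + B) \<le> norm A + norm B" by (rule norm_triangle_ineq)
    then have nB': "norm B = r1" using nA nB nAB by linarith
    then have B0: "B \<noteq> 0" using r by auto
    have "A = (r2 / norm B) *\<^sub>R B"
      by (rule norm_eq_lemma) (use nA nB nAB B0 in auto)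
    then have Ae: "A = (r2 / r1) *\<^sub>R B" using nB' by simp
    have "c2 - c1 = (r2/r1 + 1) *\<^sub>R B" using AB Ae by (simp add: algebra_simps)
    then have "(r1/(r1+r2)) *\<^sub>R (c2 - c1) = ((r1/(r1+r2)) * (r2/r1 + 1)) *\<^sub>R B" by simp
    also have "(r1/(r1+r2)) * (r2/r1 + 1) = 1"
    proof -
      have "r2/r1 + 1 = (r1+r2)/r1" using r by (simp add: field_simps)
      moreover have "r1 + r2 \<noteq> 0" "r1 \<noteq> 0" using r by auto
      ultimately show ?thesis by simp
    qed
    finally have "(r1/(r1+r2)) *\<^sub>R (c2 - c1) = B" by simp
    then show "x = p" unfolding p_def B_def by (simp add: algebra_simps)
  qed
  have "cball c1 r1 \<inter> cball c2 r2 = {p}"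
    using p1 p2 uniq by auto
  then show "tangent (Ball c1 r1) (Ball c2 r2)" using tangent_BB by blast
qed

lemma dir_vec:
  fixes v :: "'a::euclidean_space"
  shows "\<exists>e. norm e = 1 \<and> v = norm v *\<^sub>R e"
proof (cases "v = 0")
  case True
  obtain e :: 'a where "norm e = 1" using vector_choose_size[of 1] by auto
  then show ?thesis using True by auto
next
  case False
  then show ?thesis by (intro exI[of _ "(1/norm v) *\<^sub>R v"]) auto
qed

lemma BC_disj:
  assumes r: "r1 > 0" "r2 > 0"
  shows "disj (Ball c1 r1) (CoBall c2 r2) \<longleftrightarrow> dist c1 c2 + r1 \<le> r2"
proof -
  have eq: "disj (Ball c1 r1) (CoBall c2 r2) \<longleftrightarrow> ball c1 r1 \<inter> {x. r2 < dist x c2} = {}"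
    unfolding disj_def by auto
  show ?thesis unfolding eq
  proof
    assume d: "dist c1 c2 + r1 \<le> r2"
    show "ball c1 r1 \<inter> {x. r2 < dist x c2} = {}"
    proof (rule ccontr)
      assume "ball c1 r1 \<inter> {x. r2 < dist x c2} \<noteq> {}"
      then obtain x where x: "dist c1 x < r1" "r2 < dist x c2" by auto
      have "dist x c2 \<le> dist c1 x + dist c1 c2" by (metis dist_commute dist_triangle)
      then show False using x d by linarith
    qed
  next
    assume e: "ball c1 r1 \<inter> {x. r2 < dist x c2} = {}"
    show "dist c1 c2 + r1 \<le> r2"
    proof (rule ccontr)
      assume lt: "\<not> dist c1 c2 + r1 \<le> r2"
      obtain u :: "real^3" where u: "norm u = 1" "c1 - c2 = norm (c1 - c2) *\<^sub>R u"
        using dir_vec by blast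
      define d where "d = dist c1 c2"
      have d0: "d \<ge> 0" by (simp add: d_def)
      define M where "M = max 0 (r2 - d)"
      define t where "t = (r1 + M) / 2"
      have m: "M \<ge> 0" "M \<ge> r2 - d" "M < r1"
        using lt r unfolding d_def M_def by auto
      have t1: "0 \<le> t" using m r unfolding t_def by (auto simp: field_simps)
      have t2: "t < r1" using m r unfolding t_def by (auto simp: field_simps)
      have t3: "r2 < d + t" using m r unfolding t_def by (auto simp: field_simps)
      note t = t1 t2 t3
      define x where "x = c1 + t *\<^sub>R u"
      have "dist c1 x = t" using u t by (simp add: x_def dist_norm)
      then have x1: "x \<in> ball c1 r1" using t by simp
      have "x - c2 = (d + t) *\<^sub>R u" using u unfolding x_def d_def
        by (simp add: dist_norm algebra_simps)
      then have "dist x c2 = d + t" using u d0 t by (simp add: dist_norm)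
      then have x2: "r2 < dist x c2" using t by simp
      show False using e x1 x2 by auto
    qed
  qed
qed

lemma tangent_BC: "tangent (Ball c1 r1) (CoBall c2 r2) \<longleftrightarrow> (\<exists>p. cball c1 r1 \<inter> {x. r2 \<le> dist x c2} = {p})"
proof -
  have "ball_set (Ball c1 r1) \<inter> ball_set (CoBall c2 r2) = Some ` (cball c1 r1 \<inter> {x. r2 \<le> dist x c2})"
    by auto
  then show ?thesis unfolding tangent_def by (simp add: singleton_some)
qed

lemma BC_tang:
  assumes r: "r1 > 0" "r2 > 0" and d: "dist c1 c2 + r1 \<le> r2"
  shows "tangent (Ball c1 r1) (CoBall c2 r2) \<longleftrightarrow> dist c1 c2 + r1 = r2 \<and> c1 \<noteq> c2"
proof
  assume t: "tangent (Ball c1 r1) (CoBall c2 r2)"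
  then obtain p where p: "cball c1 r1 \<inter> {x. r2 \<le> dist x c2} = {p}" using tangent_BC by blast
  have eq: "dist c1 c2 + r1 = r2"
  proof (rule ccontr)
    assume "dist c1 c2 + r1 \<noteq> r2"
    then have lt: "dist c1 c2 + r1 < r2" using d by simp
    have "p \<in> cball c1 r1 \<inter> {x. r2 \<le> dist x c2}" using p by simp
    then have "dist c1 p \<le> r1" "r2 \<le> dist p c2" by auto
    moreover have "dist p c2 \<le> dist c1 p + dist c1 c2" by (metis dist_commute dist_triangle)
    ultimately show False using lt by linarith
  qed
  moreover have "c1 \<noteq> c2"
  proof
    assume c: "c1 = c2"
    then have rr: "r1 = r2" using eq by simp
    obtain u :: "real^3" where u: "norm u = 1" using vector_choose_size[of 1] by auto
    have "c1 + r1 *\<^sub>R u \<in> cball c1 r1 \<inter> {x. r2 \<le> dist x c2}"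
      using u c rr r by (simp add: dist_norm)
    moreover have "c1 - r1 *\<^sub>R u \<in> cball c1 r1 \<inter> {x. r2 \<le> dist x c2}"
      using u c rr r by (simp add: dist_norm)
    ultimately have "c1 + r1 *\<^sub>R u \<in> {p}" "c1 - r1 *\<^sub>R u \<in> {p}" using p by simp_all
    then have "c1 + r1 *\<^sub>R u = c1 - r1 *\<^sub>R u" by simp
    then have "inner (c1 + r1 *\<^sub>R u) u = inner (c1 - r1 *\<^sub>R u) u" by (rule arg_cong[where f="\<lambda>z. inner z u"])
    then have "r1 * inner u u = - r1 * inner u u" by (simp add: inner_add_left inner_diff_left)
    moreover have "inner u u = 1" using u by (simp add: norm_eq_1)
    ultimately show False using r by simp
  qed
  ultimately show "dist c1 c2 + r1 = r2 \<and> c1 \<noteq> c2" by simp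
next
  assume h: "dist c1 c2 + r1 = r2 \<and> c1 \<noteq> c2"
  define d where "d = dist c1 c2"
  have d0: "d > 0" using h by (simp add: d_def)
  define p where "p = c1 + (r1/d) *\<^sub>R (c1 - c2)"
  have p1: "dist c1 p = r1" using d0 r by (simp add: p_def dist_norm d_def)
  have "p - c2 = (1 + r1/d) *\<^sub>R (c1 - c2)" by (simp add: p_def algebra_simps)
  then have "dist p c2 = (1 + r1/d) * d" using d0 r by (simp add: dist_norm d_def)
  also have "\<dots> = r2" using d0 h by (simp add: field_simps d_def)
  finally have p2: "dist p c2 = r2" .
  have uniq: "x = p" if x1: "dist c1 x \<le> r1" and x2: "r2 \<le> dist x c2" for x
  proof -
    define A where "A = x - c1"
    define B where "B = c1 - c2"
    have nA: "norm A \<le> r1" using x1 by (simp add: A_def dist_norm norm_minus_commute)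
    have nB: "norm B = d" by (simp add: B_def d_def dist_norm)
    have "A + B = x - c2" by (simp add: A_def B_def)
    then have "r1 + norm B \<le> norm (A + B)" using x2 h nB by (simp add: dist_norm d_def)
    moreover have "B \<noteq> 0" using h by (simp add: B_def)
    ultimately have "A = (r1 / norm B) *\<^sub>R B" using nA by (intro norm_eq_lemma) auto
    then show "x = p" unfolding p_def using nB by (simp add: A_def B_def algebra_simps)
  qed
  have "cball c1 r1 \<inter> {x. r2 \<le> dist x c2} = {p}"
    using p1 p2 uniq by auto
  then show "tangent (Ball c1 r1) (CoBall c2 r2)" using tangent_BC by blast
qed

lemma BH_disj:
  assumes r: "r > 0" and a: "a \<noteq> 0"
  shows "disj (Ball c r) (Half a b) \<longleftrightarrow> r * norm a \<le> inner a c - b"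
proof -
  have eq: "disj (Ball c r) (Half a b) \<longleftrightarrow> ball c r \<inter> {x. inner a x < b} = {}"
    unfolding disj_def by (auto simp: some_img_int)
  have na: "norm a > 0" using a by simp
  show ?thesis unfolding eq
  proof
    assume h: "r * norm a \<le> inner a c - b"
    show "ball c r \<inter> {x. inner a x < b} = {}"
    proof (rule ccontr)
      assume "ball c r \<inter> {x. inner a x < b} \<noteq> {}"
      then obtain x where x: "dist c x < r" "inner a x < b" by auto
      have "\<bar>inner a (x - c)\<bar> \<le> norm a * norm (x - c)" by (rule Cauchy_Schwarz_ineq2)
      then have c1: "- inner a (x - c) \<le> norm a * norm (x - c)" by (rule abs_le_D2)
      have "norm (x - c) < r" using x by (simp add: dist_norm norm_minus_commute)
      then have c2: "norm a * norm (x - c) < r * norm a" using na by (simp add: mult.commute)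
      have c3: "inner a x = inner a c + inner a (x - c)" by (simp add: inner_diff_right)
      show False using x(2) h c1 c2 c3 by linarith
    qed
  next
    assume e: "ball c r \<inter> {x. inner a x < b} = {}"
    show "r * norm a \<le> inner a c - b"
    proof (rule ccontr)
      assume lt: "\<not> r * norm a \<le> inner a c - b"
      define m where "m = (inner a c - b) / norm a"
      have mr: "m < r" using lt na unfolding m_def by (simp add: field_simps)
      define M where "M = max m (-r)"
      have M: "M \<ge> m" "M \<ge> -r" "M < r" using mr r unfolding M_def by auto
      define t where "t = (M + r) / 2"
      have t1: "-r < t" using M unfolding t_def by (auto simp: field_simps)
      have t2: "t < r" using M unfolding t_def by (auto simp: field_simps)
      have t3: "m < t" using M unfolding t_def by (auto simp: field_simps)
      define x where "x = c - (t / norm a) *\<^sub>R a"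
      have "dist c x = \<bar>t\<bar>" using na by (simp add: x_def dist_norm)
      then have x1: "x \<in> ball c r" using t1 t2 by simp
      have "inner a x = inner a c - t * norm a"
        using na by (simp add: x_def inner_diff_right power2_norm_eq_inner[symmetric] power2_eq_square)
      also have "\<dots> < inner a c - m * norm a" using t3 na by simp
      also have "\<dots> = b" using na unfolding m_def by simp
      finally have x2: "inner a x < b" .
      show False using e x1 x2 by auto
    qed
  qed
qed

lemma tangent_BH: "tangent (Ball c r) (Half a b) \<longleftrightarrow> (\<exists>p. cball c r \<inter> {x. inner a x \<le> b} = {p})"
proof -
  have "ball_set (Ball c r) \<inter> ball_set (Half a b) = Some ` (cball c r \<inter> {x. inner a x \<le> b})"
    by auto
  then show ?thesis unfolding tangent_def by (simp add: singleton_some)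
qed

lemma BH_tang:
  assumes r: "r > 0" and a: "a \<noteq> 0" and h: "r * norm a \<le> inner a c - b"
  shows "tangent (Ball c r) (Half a b) \<longleftrightarrow> r * norm a = inner a c - b"
proof
  have na: "norm a > 0" using a by simp
  assume "tangent (Ball c r) (Half a b)"
  then obtain p where p: "cball c r \<inter> {x. inner a x \<le> b} = {p}" using tangent_BH by blast
  show "r * norm a = inner a c - b"
  proof (rule ccontr)
    assume "r * norm a \<noteq> inner a c - b"
    then have lt: "r * norm a < inner a c - b" using h by simp
    have "p \<in> cball c r \<inter> {x. inner a x \<le> b}" using p by simp
    then have x: "dist c p \<le> r" "inner a p \<le> b" by auto
    have "\<bar>inner a (p - c)\<bar> \<le> norm a * norm (p - c)" by (rule Cauchy_Schwarz_ineq2)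
    then have c1: "- inner a (p - c) \<le> norm a * norm (p - c)" by (rule abs_le_D2)
    have "norm (p - c) \<le> r" using x by (simp add: dist_norm norm_minus_commute)
    then have c2: "norm a * norm (p - c) \<le> r * norm a" using na by (simp add: mult.commute)
    have c3: "inner a p = inner a c + inner a (p - c)" by (simp add: inner_diff_right)
    show False using x(2) lt c1 c2 c3 by linarith
  qed
next
  have na: "norm a > 0" using a by simp
  assume eq: "r * norm a = inner a c - b"
  define p where "p = c - (r / norm a) *\<^sub>R a"
  have p1: "dist c p = r" using na r by (simp add: p_def dist_norm)
  have "inner a p = inner a c - r * norm a"
    using na by (simp add: p_def inner_diff_right power2_norm_eq_inner[symmetric] power2_eq_square)
  then have p2: "inner a p \<le> b" using eq by simp
  have uniq: "x = p" if x1: "dist c x \<le> r" and x2: "inner a x \<le> b" for x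
  proof -
    define A where "A = x - c"
    have nA: "norm A \<le> r" using x1 by (simp add: A_def dist_norm norm_minus_commute)
    have aA: "inner a A \<le> - r * norm a" using x2 eq by (simp add: A_def inner_diff_right)
    define k where "k = r / norm a"
    have "(norm (A + k *\<^sub>R a))^2 = inner (A + k *\<^sub>R a) (A + k *\<^sub>R a)"
      by (simp add: power2_norm_eq_inner)
    also have "\<dots> = inner A A + 2 * k * inner a A + k^2 * inner a a"
      by (simp add: inner_add_left inner_add_right inner_commute power2_eq_square algebra_simps)
    also have "\<dots> = (norm A)^2 + 2 * k * inner a A + k^2 * (norm a)^2"
      by (simp add: power2_norm_eq_inner)
    also have "\<dots> \<le> r^2 + 2 * k * (- r * norm a) + r^2"
    proof -
      have "(norm A)^2 \<le> r^2" using power_mono[OF nA norm_ge_zero, of 2] by simp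
      moreover have "2 * k * inner a A \<le> 2 * k * (- r * norm a)"
        using aA r na unfolding k_def by (intro mult_left_mono) auto
      moreover have "k^2 * (norm a)^2 = r^2" using na unfolding k_def by (simp add: power_divide)
      ultimately show ?thesis by linarith
    qed
    also have "\<dots> = 0" using na unfolding k_def by (simp add: power2_eq_square)
    finally have "A + k *\<^sub>R a = 0" by simp
    then show "x = p" unfolding p_def A_def k_def by (simp add: algebra_simps)
  qed
  have "cball c r \<inter> {x. inner a x \<le> b} = {p}"
    using p1 p2 uniq by auto
  then show "tangent (Ball c r) (Half a b)" using tangent_BH by blast
qed

lemma half_iff:
  assumes "a \<noteq> 0"
  shows "(inner a x < b \<longleftrightarrow> inner (sgn a) x < b / norm a) \<and>
         (inner a x \<le> b \<longleftrightarrow> inner (sgn a) x \<le> b / norm a)"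
proof -
  have na: "norm a > 0" using assms by simp
  have "inner (sgn a) x = inner a x / norm a" by (simp add: sgn_div_norm inner_scaleR_left divide_inverse mult.commute)
  then show ?thesis using na by (simp add: divide_less_cancel divide_le_cancel)
qed

lemma HH_disj:
  assumes a1: "a1 \<noteq> 0" and a2: "a2 \<noteq> 0"
  shows "disj (Half a1 b1) (Half a2 b2) \<longleftrightarrow> sgn a2 = - sgn a1 \<and> b1 / norm a1 + b2 / norm a2 \<le> 0"
proof -
  define n1 where "n1 = sgn a1"
  define n2 where "n2 = sgn a2"
  define h1 where "h1 = b1 / norm a1"
  define h2 where "h2 = b2 / norm a2"
  have n1: "inner n1 n1 = 1" using a1 unfolding n1_def by (simp add: norm_eq_1[symmetric] norm_sgn)
  have n2: "inner n2 n2 = 1" using a2 unfolding n2_def by (simp add: norm_eq_1[symmetric] norm_sgn)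
  have eq: "disj (Half a1 b1) (Half a2 b2) \<longleftrightarrow> {x. inner n1 x < h1} \<inter> {x. inner n2 x < h2} = {}"
    unfolding disj_def using half_iff[OF a1] half_iff[OF a2] unfolding n1_def n2_def h1_def h2_def
    by (auto simp: some_img_int)
  show ?thesis unfolding eq n1_def[symmetric] n2_def[symmetric] h1_def[symmetric] h2_def[symmetric]
  proof
    assume h: "n2 = - n1 \<and> h1 + h2 \<le> 0"
    show "{x. inner n1 x < h1} \<inter> {x. inner n2 x < h2} = {}"
    proof (rule ccontr)
      assume "{x. inner n1 x < h1} \<inter> {x. inner n2 x < h2} \<noteq> {}"
      then obtain x where "inner n1 x < h1" "inner n2 x < h2" by auto
      then show False using h by simp
    qed
  next
    assume e: "{x. inner n1 x < h1} \<inter> {x. inner n2 x < h2} = {}"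
    show "n2 = - n1 \<and> h1 + h2 \<le> 0"
    proof (cases "n1 + n2 = 0")
      case False
      define k where "k = 1 + inner n1 n2"
      have "0 < inner (n1 + n2) (n1 + n2)" using False by simp
      also have "inner (n1 + n2) (n1 + n2) = 2 * k"
        using n1 n2 unfolding k_def by (simp add: inner_add_left inner_add_right inner_commute)
      finally have k: "k > 0" by simp
      define t where "t = (\<bar>h1\<bar> + \<bar>h2\<bar> + 1) / k"
      define x where "x = - t *\<^sub>R (n1 + n2)"
      have "inner n1 x = - t * k" unfolding x_def k_def using n1
        by (simp add: inner_add_right algebra_simps)
      also have "\<dots> = - (\<bar>h1\<bar> + \<bar>h2\<bar> + 1)" using k unfolding t_def by simp
      finally have x1: "inner n1 x < h1" by simp
      have "inner n2 x = - t * k" unfolding x_def k_def using n2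
        by (simp add: inner_add_right inner_commute algebra_simps)
      also have "\<dots> = - (\<bar>h1\<bar> + \<bar>h2\<bar> + 1)" using k unfolding t_def by simp
      finally have x2: "inner n2 x < h2" by simp
      show ?thesis using e x1 x2 by auto
    next
      case True
      then have nn: "n2 = - n1" by (simp add: add_eq_0_iff)
      show ?thesis
      proof (rule ccontr)
        assume "\<not> (n2 = - n1 \<and> h1 + h2 \<le> 0)"
        then have hp: "h1 + h2 > 0" using nn by simp
        define x where "x = ((h1 - h2) / 2) *\<^sub>R n1"
        have x1: "inner n1 x < h1" using n1 hp by (simp add: x_def field_simps)
        have x2: "inner n2 x < h2" using n1 hp nn by (simp add: x_def field_simps)
        show False using e x1 x2 by auto
      qed
    qed
  qed
qed

lemma HH_tang:
  assumes a1: "a1 \<noteq> 0" and a2: "a2 \<noteq> 0"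
    and h: "sgn a2 = - sgn a1" "b1 / norm a1 + b2 / norm a2 \<le> 0"
  shows "tangent (Half a1 b1) (Half a2 b2) \<longleftrightarrow> b1 / norm a1 + b2 / norm a2 < 0"
proof -
  define n1 where "n1 = sgn a1"
  define h1 where "h1 = b1 / norm a1"
  define h2 where "h2 = b2 / norm a2"
  have n1: "inner n1 n1 = 1" using a1 unfolding n1_def by (simp add: norm_eq_1[symmetric] norm_sgn)
  define S where "S = {x. inner n1 x \<le> h1} \<inter> {x. - inner n1 x \<le> h2}"
  have b1: "ball_set (Half a1 b1) \<inter> ball_set (Half a2 b2) =
        Some ` ({x. inner a1 x \<le> b1} \<inter> {x. inner a2 x \<le> b2}) \<union> {None}" by auto
  have b2: "{x. inner a1 x \<le> b1} \<inter> {x. inner a2 x \<le> b2} = S"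
    using half_iff[OF a1] half_iff[OF a2] h unfolding n1_def h1_def h2_def S_def by auto
  have t: "tangent (Half a1 b1) (Half a2 b2) \<longleftrightarrow> {x. inner n1 x \<le> h1} \<inter> {x. - inner n1 x \<le> h2} = {}"
    unfolding tangent_def b1 b2 S_def[symmetric] by (rule singleton_some_none)
  show ?thesis unfolding t h1_def[symmetric] h2_def[symmetric]
  proof
    assume e: "{x. inner n1 x \<le> h1} \<inter> {x. - inner n1 x \<le> h2} = {}"
    show "h1 + h2 < 0"
    proof (rule ccontr)
      assume "\<not> h1 + h2 < 0"
      then have "h1 + h2 = 0" using h unfolding h1_def h2_def by simp
      then have "h1 *\<^sub>R n1 \<in> {x. inner n1 x \<le> h1} \<inter> {x. - inner n1 x \<le> h2}" using n1 by simp
      then show False using e by blast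
    qed
  next
    assume "h1 + h2 < 0"
    then show "{x. inner n1 x \<le> h1} \<inter> {x. - inner n1 x \<le> h2} = {}" by auto
  qed
qed

lemma CC_not_disj: "\<not> disj (CoBall c1 r1) (CoBall c2 r2)"
  unfolding disj_def by auto

lemma CH_not_disj:
  assumes r: "r > 0" and a: "a \<noteq> 0"
  shows "\<not> disj (CoBall c r) (Half a b)"
proof
  assume e: "disj (CoBall c r) (Half a b)"
  have na: "norm a > 0" using a by simp
  define t where "t = (\<bar>inner a c\<bar> + \<bar>b\<bar> + 1) / (norm a)^2 + (r + 1) / norm a"
  have t0: "t > 0" using na r unfolding t_def by (intro add_pos_pos) auto
  define x where "x = c - t *\<^sub>R a"
  have "dist x c = t * norm a" using t0 by (simp add: x_def dist_norm)
  also have "\<dots> = (\<bar>inner a c\<bar> + \<bar>b\<bar> + 1) / norm a + (r + 1)"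
    using na unfolding t_def by (simp add: field_simps power2_eq_square)
  finally have "dist x c > r" using na
    by (smt (verit) divide_nonneg_pos abs_ge_zero)
  moreover have "inner a x = inner a c - t * (norm a)^2"
    by (simp add: x_def inner_diff_right power2_norm_eq_inner)
  moreover have "t * (norm a)^2 = \<bar>inner a c\<bar> + \<bar>b\<bar> + 1 + (r + 1) * norm a"
    using na unfolding t_def by (simp add: field_simps power2_eq_square)
  ultimately have "dist x c > r" "inner a x < b" using r na
    by (auto, smt (verit) abs_ge_self abs_ge_minus_self mult_pos_pos)
  then show False using e unfolding disj_def by auto
qed

type_synonym lv = "((real^3) \<times> real) \<times> real"

definition Lf :: "lv \<Rightarrow> lv \<Rightarrow> real" where
  "Lf p q = inner (fst p) (fst q) - snd p * snd q"

lemma Lf_sym: "Lf p q = Lf q p"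
  unfolding Lf_def by (simp add: inner_commute mult.commute)

lemma Lf_add_left: "Lf (p + q) r = Lf p r + Lf q r"
  unfolding Lf_def by (simp add: inner_add_left algebra_simps)
lemma Lf_add_right: "Lf r (p + q) = Lf r p + Lf r q"
  unfolding Lf_def by (simp add: inner_add_right algebra_simps)
lemma Lf_diff_left: "Lf (p - q) r = Lf p r - Lf q r"
  unfolding Lf_def by (simp add: inner_diff_left algebra_simps)
lemma Lf_diff_right: "Lf r (p - q) = Lf r p - Lf r q"
  unfolding Lf_def by (simp add: inner_diff_right algebra_simps)
lemma Lf_scale_left: "Lf (k *\<^sub>R p) q = k * Lf p q"
  unfolding Lf_def by (simp add: algebra_simps)
lemma Lf_scale_right: "Lf p (k *\<^sub>R q) = k * Lf p q"
  unfolding Lf_def by (simp add: algebra_simps)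
lemma Lf_minus_left: "Lf (- p) q = - Lf p q"
  unfolding Lf_def by (simp add: algebra_simps)
lemma Lf_minus_right: "Lf p (- q) = - Lf p q"
  unfolding Lf_def by (simp add: algebra_simps)
lemma Lf_zero_left: "Lf 0 q = 0" unfolding Lf_def by simp
lemma Lf_zero_right: "Lf p 0 = 0" unfolding Lf_def by simp

lemmas Lf_simps = Lf_add_left Lf_add_right Lf_diff_left Lf_diff_right Lf_scale_left Lf_scale_right
  Lf_minus_left Lf_minus_right Lf_zero_left Lf_zero_right

fun lor :: "ball3 \<Rightarrow> lv" where
  "lor (Ball c r) = (((1/r) *\<^sub>R c, (inner c c - r^2 - 1)/(2*r)), (inner c c - r^2 + 1)/(2*r))"
| "lor (CoBall c r) = ((- ((1/r) *\<^sub>R c), - ((inner c c - r^2 - 1)/(2*r))), - ((inner c c - r^2 + 1)/(2*r)))"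
| "lor (Half a b) = ((- sgn a, - (b / norm a)), - (b / norm a))"

definition zy :: "lv \<Rightarrow> real" where "zy p = snd p - snd (fst p)"

lemma zy_minus: "zy (- p) = - zy p" unfolding zy_def by simp

lemma zy_Ball: "r > 0 \<Longrightarrow> zy (lor (Ball c r)) = 1/r"
  unfolding zy_def by (simp add: field_simps)
lemma zy_CoBall: "r > 0 \<Longrightarrow> zy (lor (CoBall c r)) = -1/r"
  unfolding zy_def by (simp add: field_simps)
lemma zy_Half: "zy (lor (Half a b)) = 0"
  unfolding zy_def by simp

lemma dist_sq: "(dist c1 c2)^2 = inner c1 c1 - 2 * inner c1 c2 + inner c2 c2"
  for c1 c2 :: "real^3"
  by (simp add: dist_norm power2_norm_eq_inner inner_diff_left inner_diff_right inner_commute)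

lemma L_BB:
  assumes "r1 > 0" "r2 > 0"
  shows "Lf (lor (Ball c1 r1)) (lor (Ball c2 r2)) = (r1^2 + r2^2 - (dist c1 c2)^2) / (2*r1*r2)"
  using assms unfolding Lf_def dist_sq
  by (simp add: field_simps power2_eq_square)

lemma L_BC:
  assumes "r1 > 0" "r2 > 0"
  shows "Lf (lor (Ball c1 r1)) (lor (CoBall c2 r2)) = - ((r1^2 + r2^2 - (dist c1 c2)^2) / (2*r1*r2))"
  using assms unfolding Lf_def dist_sq
  by (simp add: field_simps power2_eq_square)

lemma L_BH:
  assumes "r > 0" "a \<noteq> 0"
  shows "Lf (lor (Ball c r)) (lor (Half a b)) = (b - inner a c) / (r * norm a)"
  using assms unfolding Lf_def
  by (simp add: field_simps sgn_div_norm inner_commute power2_eq_square)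

lemma L_HH:
  shows "Lf (lor (Half a1 b1)) (lor (Half a2 b2)) = inner (sgn a1) (sgn a2)"
  unfolding Lf_def by simp

lemma L_self:
  assumes "valid_ball X"
  shows "Lf (lor X) (lor X) = 1"
proof (cases X)
  case (Ball c r)
  then have "r > 0" using assms by (simp add: valid_ball_def)
  then show ?thesis using Ball unfolding Lf_def by (simp add: field_simps power2_eq_square)
next
  case (CoBall c r)
  then have "r > 0" using assms by (simp add: valid_ball_def)
  then show ?thesis using CoBall unfolding Lf_def by (simp add: field_simps power2_eq_square)
next
  case (Half a b)
  then have "a \<noteq> 0" using assms by (simp add: valid_ball_def)
  then show ?thesis using Half unfolding Lf_def by (simp add: norm_eq_1[symmetric] norm_sgn)
qed

definition good :: "ball3 \<Rightarrow> ball3 \<Rightarrow> bool" where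
  "good X Y \<longleftrightarrow> Lf (lor X) (lor Y) \<le> -1 \<and>
     (tangent X Y \<longleftrightarrow> (Lf (lor X) (lor Y) = -1 \<and> lor X \<noteq> - lor Y))"

lemma good_sym: "good X Y \<Longrightarrow> good Y X"
  unfolding good_def by (metis Lf_sym tangent_sym minus_minus)

lemma pair_BB:
  assumes r: "r1 > 0" "r2 > 0" and d: "disj (Ball c1 r1) (Ball c2 r2)"
  shows "good (Ball c1 r1) (Ball c2 r2)"
proof -
  define D where "D = dist c1 c2"
  have dd: "r1 + r2 \<le> D" using BB_disj[OF r] d D_def by simp
  have tg: "tangent (Ball c1 r1) (Ball c2 r2) \<longleftrightarrow> D = r1 + r2" using BB_tang[OF r] dd D_def by simp
  have L: "Lf (lor (Ball c1 r1)) (lor (Ball c2 r2)) = (r1^2 + r2^2 - D^2) / (2*r1*r2)"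
    using L_BB[OF r] D_def by simp
  have p: "2*r1*r2 > 0" using r by simp
  have sq: "(r1 + r2)^2 \<le> D^2" using dd r by (intro power_mono) auto
  have le: "(r1^2 + r2^2 - D^2) / (2*r1*r2) \<le> -1"
    using p sq by (simp add: divide_le_eq power2_eq_square algebra_simps)
  have eq: "(r1^2 + r2^2 - D^2) / (2*r1*r2) = -1 \<longleftrightarrow> D = r1 + r2"
  proof
    assume "(r1^2 + r2^2 - D^2) / (2*r1*r2) = -1"
    then have "D^2 = (r1 + r2)^2" using p r by (simp add: divide_eq_eq power2_eq_square algebra_simps)
    then show "D = r1 + r2" using r dd by (simp add: power2_eq_iff)
  next
    assume "D = r1 + r2"
    then show "(r1^2 + r2^2 - D^2) / (2*r1*r2) = -1" using p r by (simp add: divide_eq_eq power2_eq_square algebra_simps)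
  qed
  have nn: "lor (Ball c1 r1) \<noteq> - lor (Ball c2 r2)"
  proof
    assume "lor (Ball c1 r1) = - lor (Ball c2 r2)"
    then have "zy (lor (Ball c1 r1)) = zy (- lor (Ball c2 r2))" by (rule arg_cong[where f=zy])
    then have "zy (lor (Ball c1 r1)) = - zy (lor (Ball c2 r2))" by (simp only: zy_minus)
    then have "1/r1 = - (1/r2)" using zy_Ball r by simp
    then show False using r by (smt (verit) divide_pos_pos)
  qed
  show ?thesis unfolding good_def L using le eq tg nn by auto
qed

lemma pair_BC:
  assumes r: "r1 > 0" "r2 > 0" and d: "disj (Ball c1 r1) (CoBall c2 r2)"
  shows "good (Ball c1 r1) (CoBall c2 r2)"
proof -
  define D where "D = dist c1 c2"
  have D0: "D \<ge> 0" by (simp add: D_def)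
  have dd: "D + r1 \<le> r2" using BC_disj[OF r] d D_def by simp
  have tg: "tangent (Ball c1 r1) (CoBall c2 r2) \<longleftrightarrow> D + r1 = r2 \<and> c1 \<noteq> c2"
    using BC_tang[OF r] dd D_def by simp
  have L: "Lf (lor (Ball c1 r1)) (lor (CoBall c2 r2)) = - ((r1^2 + r2^2 - D^2) / (2*r1*r2))"
    using L_BC[OF r] D_def by simp
  have p: "2*r1*r2 > 0" using r by simp
  have sq: "D^2 \<le> (r2 - r1)^2" using dd D0 by (intro power_mono) auto
  have le: "- ((r1^2 + r2^2 - D^2) / (2*r1*r2)) \<le> -1"
    using p sq by (simp add: le_divide_eq power2_eq_square algebra_simps)
  have eq: "- ((r1^2 + r2^2 - D^2) / (2*r1*r2)) = -1 \<longleftrightarrow> D + r1 = r2"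
  proof
    assume "- ((r1^2 + r2^2 - D^2) / (2*r1*r2)) = -1"
    then have "D^2 = (r2 - r1)^2" using p r by (simp add: divide_eq_eq power2_eq_square algebra_simps)
    then have "D = r2 - r1 \<or> D = r1 - r2" by (simp add: power2_eq_iff)
    then show "D + r1 = r2" using dd D0 by (elim disjE) linarith+
  next
    assume "D + r1 = r2"
    then have De: "D = r2 - r1" by linarith
    have "r1^2 + r2^2 - D^2 = 2*r1*r2" unfolding De by (simp add: power2_eq_square algebra_simps)
    then show "- ((r1^2 + r2^2 - D^2) / (2*r1*r2)) = -1" using p r by simp
  qed
  have nn: "lor (Ball c1 r1) = - lor (CoBall c2 r2) \<longleftrightarrow> c1 = c2 \<and> r1 = r2"
  proof
    assume h: "lor (Ball c1 r1) = - lor (CoBall c2 r2)"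
    then have "zy (lor (Ball c1 r1)) = zy (- lor (CoBall c2 r2))" by (rule arg_cong[where f=zy])
    then have "zy (lor (Ball c1 r1)) = - zy (lor (CoBall c2 r2))" by (simp only: zy_minus)
    then have "1/r1 = 1/r2" using zy_Ball zy_CoBall r by simp
    then have rr: "r1 = r2" using r by simp
    from h have "(1/r1) *\<^sub>R c1 = (1/r2) *\<^sub>R c2" by simp
    then have "c1 = c2" using rr r by simp
    then show "c1 = c2 \<and> r1 = r2" using rr by simp
  next
    assume "c1 = c2 \<and> r1 = r2"
    then show "lor (Ball c1 r1) = - lor (CoBall c2 r2)" by simp
  qed
  have "tangent (Ball c1 r1) (CoBall c2 r2) \<longleftrightarrow> D + r1 = r2 \<and> \<not> (c1 = c2 \<and> r1 = r2)"
    using tg unfolding D_def by auto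
  then show ?thesis unfolding good_def L using le eq nn by auto
qed

lemma pair_BH:
  assumes r: "r > 0" and a: "a \<noteq> 0" and d: "disj (Ball c r) (Half a b)"
  shows "good (Ball c r) (Half a b)"
proof -
  have dd: "r * norm a \<le> inner a c - b" using BH_disj[OF r a] d by simp
  have tg: "tangent (Ball c r) (Half a b) \<longleftrightarrow> r * norm a = inner a c - b" using BH_tang[OF r a dd] .
  have L: "Lf (lor (Ball c r)) (lor (Half a b)) = (b - inner a c) / (r * norm a)" using L_BH[OF r a] .
  have p: "r * norm a > 0" using r a by simp
  have le: "(b - inner a c) / (r * norm a) \<le> -1" using p dd by (simp add: divide_le_eq)
  have eq: "(b - inner a c) / (r * norm a) = -1 \<longleftrightarrow> r * norm a = inner a c - b"
    using p by (auto simp: divide_eq_eq)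
  have nn: "lor (Ball c r) \<noteq> - lor (Half a b)"
  proof
    assume "lor (Ball c r) = - lor (Half a b)"
    then have "zy (lor (Ball c r)) = zy (- lor (Half a b))" by (rule arg_cong[where f=zy])
    then have "zy (lor (Ball c r)) = - zy (lor (Half a b))" by (simp only: zy_minus)
    then show False using zy_Ball[OF r] zy_Half r by simp
  qed
  show ?thesis unfolding good_def L using le eq tg nn by auto
qed

lemma pair_HH:
  assumes a1: "a1 \<noteq> 0" and a2: "a2 \<noteq> 0" and d: "disj (Half a1 b1) (Half a2 b2)"
  shows "good (Half a1 b1) (Half a2 b2)"
proof -
  have dd: "sgn a2 = - sgn a1" "b1 / norm a1 + b2 / norm a2 \<le> 0" using HH_disj[OF a1 a2] d by auto
  have tg: "tangent (Half a1 b1) (Half a2 b2) \<longleftrightarrow> b1 / norm a1 + b2 / norm a2 < 0"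
    using HH_tang[OF a1 a2 dd] .
  have n1: "inner (sgn a1) (sgn a1) = 1" using a1 by (simp add: norm_eq_1[symmetric] norm_sgn)
  have "Lf (lor (Half a1 b1)) (lor (Half a2 b2)) = inner (sgn a1) (sgn a2)" by (rule L_HH)
  also have "\<dots> = -1" using dd n1 by simp
  finally have L: "Lf (lor (Half a1 b1)) (lor (Half a2 b2)) = -1" .
  have nn: "lor (Half a1 b1) = - lor (Half a2 b2) \<longleftrightarrow> b1 / norm a1 + b2 / norm a2 = 0"
    using dd by (auto simp: add_eq_0_iff)
  show ?thesis unfolding good_def L using tg nn dd by auto
qed

lemma pair_good:
  assumes vX: "valid_ball X" and vY: "valid_ball Y" and d: "disj X Y"
  shows "good X Y"
proof (cases X)
  case (Ball c1 r1)
  then have r1: "r1 > 0" using vX by (simp add: valid_ball_def)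
  show ?thesis
  proof (cases Y)
    case (Ball c2 r2)
    then show ?thesis using pair_BB r1 vY d \<open>X = _\<close> by (simp add: valid_ball_def)
  next
    case (CoBall c2 r2)
    then show ?thesis using pair_BC r1 vY d \<open>X = _\<close> by (simp add: valid_ball_def)
  next
    case (Half a2 b2)
    then show ?thesis using pair_BH r1 vY d \<open>X = _\<close> by (simp add: valid_ball_def)
  qed
next
  case (CoBall c1 r1)
  then have r1: "r1 > 0" using vX by (simp add: valid_ball_def)
  show ?thesis
  proof (cases Y)
    case (Ball c2 r2)
    then have "good Y X" using pair_BC r1 vY d \<open>X = _\<close> disj_sym by (simp add: valid_ball_def)
    then show ?thesis by (rule good_sym)
  next
    case (CoBall c2 r2)
    then show ?thesis using CC_not_disj d \<open>X = _\<close> by simp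
  next
    case (Half a2 b2)
    then show ?thesis using CH_not_disj r1 vY d \<open>X = _\<close> by (simp add: valid_ball_def)
  qed
next
  case (Half a1 b1)
  then have a1: "a1 \<noteq> 0" using vX by (simp add: valid_ball_def)
  show ?thesis
  proof (cases Y)
    case (Ball c2 r2)
    then have "good Y X" using pair_BH a1 vY d \<open>X = _\<close> disj_sym by (simp add: valid_ball_def)
    then show ?thesis by (rule good_sym)
  next
    case (CoBall c2 r2)
    then show ?thesis using CH_not_disj a1 vY d \<open>X = _\<close> disj_sym by (simp add: valid_ball_def)
  next
    case (Half a2 b2)
    then show ?thesis using pair_HH a1 vY d \<open>X = _\<close> by (simp add: valid_ball_def)
  qed
qed

lemma cos_le_half_range:
  fixes d :: real
  assumes "0 < d" "d < 2*pi" "cos d \<le> 1/2"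
  shows "pi/3 \<le> d \<and> d \<le> 5*pi/3"
proof (rule ccontr)
  assume "\<not> (pi/3 \<le> d \<and> d \<le> 5*pi/3)"
  then consider "d < pi/3" | "d > 5*pi/3" by linarith
  then show False
  proof cases
    case 1
    have "cos (pi/3) < cos d" by (rule cos_monotone_0_pi) (use 1 assms in auto)
    then show False using assms cos_60 by simp
  next
    case 2
    have "cos (pi/3) < cos (2*pi - d)" by (rule cos_monotone_0_pi) (use 2 assms in auto)
    then show False using assms cos_60 by simp
  qed
qed

lemma circle6:
  fixes th :: "'a \<Rightarrow> real"
  assumes fin: "finite V" and card: "card V = 6"
    and rng: "\<And>v. v\<in>V \<Longrightarrow> 0 \<le> th v \<and> th v < 2*pi"
    and cs: "\<And>v w. v\<in>V \<Longrightarrow> w\<in>V \<Longrightarrow> v \<noteq> w \<Longrightarrow> cos (th v - th w) \<le> 1/2"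
  shows "\<exists>g. bij_betw g {..<6} V \<and> (\<forall>i<6. \<forall>j<6. cos (th (g i) - th (g j)) = cos ((real i - real j) * pi / 3))"
proof -
  have inj: "inj_on th V"
  proof (rule inj_onI, rule ccontr)
    fix v w assume "v \<in> V" "w \<in> V" "th v = th w" "v \<noteq> w"
    then have "cos (th v - th w) \<le> 1/2" using cs by blast
    with \<open>th v = th w\<close> show False by simp
  qed
  define T where "T = th ` V"
  have finT: "finite T" using fin T_def by simp
  have cardT: "card T = 6" using card inj T_def by (simp add: card_image)
  define s where "s = sorted_list_of_set T"
  have slen: "length s = 6" using cardT s_def by simp
  have sset: "set s = T" using finT s_def by simp
  have ssort: "sorted_wrt (<) s" using s_def by simp
  have sdist: "distinct s" using ssort strict_sorted_iff by blast
  have key: "pi/3 \<le> s!j - s!i \<and> s!j - s!i \<le> 5*pi/3" if "i < j" "j < 6" for i j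
  proof -
    have lt: "s!i < s!j" using sorted_wrt_nth_less[OF ssort that(1)] that slen by simp
    have "s!i \<in> T" "s!j \<in> T" using that slen sset nth_mem by (metis order.strict_trans)+
    then obtain v w where v: "v \<in> V" "s!i = th v" and w: "w \<in> V" "s!j = th w"
      unfolding T_def by blast
    have "v \<noteq> w" using lt v w by auto
    then have "cos (th w - th v) \<le> 1/2" using cs v w by blast
    moreover have "th w - th v < 2*pi" using rng[OF v(1)] rng[OF w(1)] by linarith
    ultimately show ?thesis using cos_le_half_range[of "s!j - s!i"] lt v w by simp
  qed
  have k01: "pi/3 \<le> s!1 - s!0" using key[of 0 1] by simp
  have k12: "pi/3 \<le> s!2 - s!1" using key[of 1 2] by simp
  have k23: "pi/3 \<le> s!3 - s!2" using key[of 2 3] by simp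
  have k34: "pi/3 \<le> s!4 - s!3" using key[of 3 4] by simp
  have k45: "pi/3 \<le> s!5 - s!4" using key[of 4 5] by simp
  have k05: "s!5 - s!0 \<le> 5*pi/3" using key[of 0 5] by simp
  have sval: "s!k = s!0 + real k * pi / 3" if "k < 6" for k
  proof -
    have e1: "s!1 = s!0 + 1 * pi/3" using k01 k12 k23 k34 k45 k05 by linarith
    have e2: "s!2 = s!0 + 2 * pi/3" using k01 k12 k23 k34 k45 k05 by linarith
    have e3: "s!3 = s!0 + 3 * pi/3" using k01 k12 k23 k34 k45 k05 by linarith
    have e4: "s!4 = s!0 + 4 * pi/3" using k01 k12 k23 k34 k45 k05 by linarith
    have e5: "s!5 = s!0 + 5 * pi/3" using k01 k12 k23 k34 k45 k05 by linarith
    have "k = 0 \<or> k = 1 \<or> k = 2 \<or> k = 3 \<or> k = 4 \<or> k = 5" using that by auto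
    then show ?thesis
    proof (elim disjE)
      assume "k = 0" then show ?thesis by simp
    next
      assume "k = 1" then show ?thesis using e1 by simp
    next
      assume "k = 2" then show ?thesis using e2 by simp
    next
      assume "k = 3" then show ?thesis using e3 by simp
    next
      assume "k = 4" then show ?thesis using e4 by simp
    next
      assume "k = 5" then show ?thesis using e5 by simp
    qed
  qed
  define g where "g i = inv_into V th (s!i)" for i
  have b1: "bij_betw ((!) s) {..<6} T" using bij_betw_nth[OF sdist] slen sset by simp
  have b2: "bij_betw th V T" using inj T_def by (simp add: bij_betw_def)
  have b3: "bij_betw (inv_into V th) T V" using bij_betw_inv_into[OF b2] .
  have bg: "bij_betw g {..<6} V" unfolding g_def
    using bij_betw_trans[OF b1 b3] by (simp add: comp_def)
  have thg: "th (g i) = s!i" if "i < 6" for i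
  proof -
    have "s!i \<in> th ` V" using that slen sset T_def nth_mem by metis
    then show ?thesis unfolding g_def by (rule f_inv_into_f)
  qed
  have "\<forall>i<6. \<forall>j<6. cos (th (g i) - th (g j)) = cos ((real i - real j) * pi / 3)"
  proof (intro allI impI)
    fix i j :: nat assume "i < 6" "j < 6"
    then have "th (g i) - th (g j) = (real i - real j) * pi / 3"
      using thg[of i] thg[of j] sval[of i] sval[of j] by (simp add: algebra_simps diff_divide_distrib)
    then show "cos (th (g i) - th (g j)) = cos ((real i - real j) * pi / 3)" by (rule arg_cong[where f=cos])
  qed
  with bg show ?thesis by blast
qed

lemma cos_k3:
  assumes "d \<in> {1,2,3,4,5::nat}"
  shows "cos (real d * pi / 3) = (if d = 1 \<or> d = 5 then 1/2 else if d = 3 then -1 else -1/2)"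
proof -
  have a2: "cos (real (2::nat) * pi / 3) = -1/2"
  proof -
    have "real (2::nat) * pi / 3 = pi - pi/3" by simp
    then show ?thesis by (simp only: cos_pi_minus cos_60)
  qed
  have a4: "cos (real (4::nat) * pi / 3) = -1/2"
  proof -
    have "real (4::nat) * pi / 3 = pi/3 + pi" by simp
    then show ?thesis by (simp only: cos_periodic_pi cos_60)
  qed
  have a5: "cos (real (5::nat) * pi / 3) = 1/2"
  proof -
    have "real (5::nat) * pi / 3 = 2*pi - pi/3" by simp
    then show ?thesis by (simp only: cos_2pi_minus cos_60)
  qed
  have a3: "cos (real (3::nat) * pi / 3) = -1"
  proof -
    have "real (3::nat) * pi / 3 = pi" by simp
    then show ?thesis by (simp only: cos_pi)
  qed
  have a1: "cos (real (1::nat) * pi / 3) = 1/2"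
  proof -
    have "real (1::nat) * pi / 3 = pi/3" by simp
    then show ?thesis by (simp only: cos_60)
  qed
  from assms have "d = 1 \<or> d = 2 \<or> d = 3 \<or> d = 4 \<or> d = 5" by simp
  then show ?thesis
  proof (elim disjE)
  qed (simp_all only: a1 a2 a3 a4 a5, simp_all)
qed

lemma cycle6_cases: "cycle_edges 6 i j \<longleftrightarrow> i < 6 \<and> j < 6 \<and> (i = j + 1 \<or> j = i + 1 \<or> (i = 0 \<and> j = 5) \<or> (i = 5 \<and> j = 0))"
  unfolding cycle_edges_def by (auto simp: mod_Suc)

lemma cos_table:
  assumes "i < 6" "j < 6" "i \<noteq> j"
  shows "(cycle_edges 6 i j \<longrightarrow> cos ((real i - real j) * pi / 3) = 1/2) \<and>
         (\<not> cycle_edges 6 i j \<longrightarrow> cos ((real i - real j) * pi / 3) < 1/2)"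
proof -
  define d where "d = (if j \<le> i then i - j else j - i)"
  have cd: "cos ((real i - real j) * pi / 3) = cos (real d * pi / 3)"
  proof (cases "j \<le> i")
    case True then show ?thesis by (simp add: d_def of_nat_diff)
  next
    case False
    then have "(real i - real j) * pi / 3 = - (real d * pi / 3)" by (simp add: d_def of_nat_diff field_simps)
    then show ?thesis by (simp only: cos_minus)
  qed
  have dr: "d \<in> {1,2,3,4,5}" using assms unfolding d_def by auto
  have ce: "cycle_edges 6 i j \<longleftrightarrow> d = 1 \<or> d = 5"
    using assms unfolding cycle6_cases d_def by auto
  show ?thesis using cos_k3[OF dr] cd ce by auto
qed

lemma DIM_lv: "DIM(lv) = 5" by simp

lemma dep6:
  fixes F :: "nat \<Rightarrow> lv"
  shows "\<exists>c. (\<exists>i<6. c i \<noteq> 0) \<and> (\<Sum>i<6. c i *\<^sub>R F i) = 0"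
proof (cases "inj_on F {..<6}")
  case False
  then obtain i j where ij: "i < 6" "j < 6" "i \<noteq> j" "F i = F j"
    unfolding inj_on_def by auto
  define c where "c k = (if k = i then 1 else 0) - (if k = j then 1 else (0::real))" for k
  have pt: "c k *\<^sub>R F k = (if k = i then F i else 0) - (if k = j then F j else 0)" for k
    unfolding c_def by (cases "k = i"; cases "k = j") (auto simp: scaleR_diff_left)
  have "(\<Sum>k<6. c k *\<^sub>R F k) = (\<Sum>k<6. (if k = i then F i else 0)) - (\<Sum>k<6. (if k = j then F j else 0))"
    unfolding pt by (rule sum_subtractf)
  also have "(\<Sum>k<6. (if k = i then F i else 0)) = F i" using ij by (simp add: sum.delta)
  also have "(\<Sum>k<6. (if k = j then F j else 0)) = F j" using ij by (simp add: sum.delta)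
  also have "F i - F j = 0" using ij by simp
  finally show ?thesis using ij by (intro exI[of _ c]) (auto simp: c_def)
next
  case True
  define S where "S = F ` {..<6}"
  have cardS: "card S = 6" using True by (simp add: S_def card_image)
  have "\<not> independent S"
  proof
    assume "independent S"
    then have "card S \<le> DIM(lv)" using independent_bound by blast
    then show False using cardS by simp
  qed
  moreover have finS: "finite S" by (simp add: S_def)
  ultimately obtain u where u: "\<exists>v\<in>S. u v \<noteq> 0" "(\<Sum>v\<in>S. u v *\<^sub>R v) = 0"
    using real_vector.dependent_finite[OF finS] by auto
  define c where "c k = u (F k)" for k
  have "(\<Sum>k<6. c k *\<^sub>R F k) = (\<Sum>v\<in>S. u v *\<^sub>R v)"
    unfolding S_def c_def using sum.reindex[OF True, of "\<lambda>v. u v *\<^sub>R v"] by (simp add: comp_def)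
  also have "\<dots> = 0" by (rule u(2))
  finally have s0: "(\<Sum>k<6. c k *\<^sub>R F k) = 0" .
  obtain v where v: "v \<in> S" "u v \<noteq> 0" using u(1) by blast
  then obtain k where k: "k < 6" "v = F k" unfolding S_def by auto
  have "c k \<noteq> 0" using v k unfolding c_def by simp
  then show ?thesis using s0 k by blast
qed

lemma gram3:
  fixes al be ga c1 c2 c3 :: real
  assumes "c1 + al * c2 + be * c3 = 0" "al * c1 + c2 + ga * c3 = 0" "be * c1 + ga * c2 + c3 = 0"
    and "1 + 2*al*be*ga - al^2 - be^2 - ga^2 \<noteq> 0"
  shows "c1 = 0 \<and> c2 = 0 \<and> c3 = 0"
proof -
  define dt where "dt = 1 + 2*al*be*ga - al^2 - be^2 - ga^2"
  have "dt * c1 = (1 - ga^2) * (c1 + al * c2 + be * c3) + (be*ga - al) * (al * c1 + c2 + ga * c3)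
        + (al*ga - be) * (be * c1 + ga * c2 + c3)"
    unfolding dt_def by (simp add: power2_eq_square algebra_simps)
  then have 1: "dt * c1 = 0" using assms by simp
  have "dt * c2 = (be*ga - al) * (c1 + al * c2 + be * c3) + (1 - be^2) * (al * c1 + c2 + ga * c3)
        + (al*be - ga) * (be * c1 + ga * c2 + c3)"
    unfolding dt_def by (simp add: power2_eq_square algebra_simps)
  then have 2: "dt * c2 = 0" using assms by simp
  have "dt * c3 = (al*ga - be) * (c1 + al * c2 + be * c3) + (al*be - ga) * (al * c1 + c2 + ga * c3)
        + (1 - al^2) * (be * c1 + ga * c2 + c3)"
    unfolding dt_def by (simp add: power2_eq_square algebra_simps)
  then have 3: "dt * c3 = 0" using assms by simp
  show ?thesis using 1 2 3 assms(4) unfolding dt_def by simp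
qed

lemma spacelike:
  fixes u t :: lv
  assumes tt: "Lf t t < 0" and ut: "Lf u t = 0"
  shows "Lf u u \<ge> 0 \<and> (Lf u u = 0 \<longrightarrow> u = 0)"
proof -
  obtain X m where u: "u = (X, m)" by (cases u)
  obtain P s where t: "t = (P, s)" by (cases t)
  have h1: "inner P P < s * s" using tt t by (simp add: Lf_def)
  have h2: "inner X P = m * s" using ut u t by (simp add: Lf_def)
  have cs: "(inner X P)^2 \<le> inner X X * inner P P" by (rule Cauchy_Schwarz_ineq)
  have PP: "inner P P \<ge> 0" by simp
  have XX: "inner X X \<ge> 0" by simp
  have ss: "s * s > 0" using h1 PP by linarith
  have mm: "(m * m) * (s * s) \<le> inner X X * inner P P" using cs h2 by (simp add: power2_eq_square algebra_simps)
  have "inner X X * inner P P \<le> inner X X * (s * s)" using XX h1 by (intro mult_left_mono) auto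
  then have "(m * m) * (s * s) \<le> inner X X * (s * s)" using mm by linarith
  then have le: "m * m \<le> inner X X" using ss by (rule mult_right_le_imp_le)
  have Luu: "Lf u u = inner X X - m * m" using u by (simp add: Lf_def)
  show ?thesis
  proof
    show "Lf u u \<ge> 0" using le Luu by simp
  next
    show "Lf u u = 0 \<longrightarrow> u = 0"
    proof
      assume z: "Lf u u = 0"
      have X0: "X = 0"
      proof (rule ccontr)
        assume "X \<noteq> 0"
        then have "inner X X > 0" by simp
        then have "inner X X * inner P P < inner X X * (s * s)" using h1 by simp
        then have "(m * m) * (s * s) < inner X X * (s * s)" using mm by linarith
        then have "m * m < inner X X" by (rule mult_right_less_imp_less) (use ss in simp)
        then show False using z Luu by simp
      qed
      then have "m * m = 0" using z Luu by simp
      then have "m = 0" by simp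
      then show "u = 0" using X0 u by (simp add: zero_prod_def)
    qed
  qed
qed

lemma three_neg:
  fixes k0 k1 k2 :: real
  assumes "k0*k1 < 0" "k0*k2 < 0" "k1*k2 < 0" shows False
  using assms by (auto simp: mult_less_0_iff)

lemma prod_neg:
  fixes a b rho :: real
  assumes "a*a = rho" "b*b = rho" "a*b \<le> rho - 2"
  shows "a*b < 0"
proof (rule ccontr)
  assume "\<not> a*b < 0"
  then have ab: "a*b \<ge> 0" by simp
  have "(a*b)^2 = rho^2" using assms by (simp add: power2_eq_square algebra_simps)
  then have "a*b = rho \<or> a*b = - rho" by (simp add: power2_eq_iff)
  moreover have "rho \<ge> 0" using assms(1) zero_le_square[of a] by simp
  ultimately show False using ab assms(3) by linarith
qed

lemma abc_facts:
  fixes al be ga :: real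
  assumes a: "al \<le> -1" and b: "be \<le> -1" and g: "ga \<le> -1"
  defines "dt \<equiv> 1 + 2*al*be*ga - al^2 - be^2 - ga^2"
    and "S \<equiv> (1 - ga^2 + be*ga - al + al*ga - be) + (be*ga - al + 1 - be^2 + al*be - ga)
             + (al*ga - be + al*be - ga + 1 - al^2)"
  shows "dt < 0 \<and> S / dt \<ge> -3 \<and> (S / dt = -3 \<longrightarrow> al = -1 \<and> be = -1 \<and> ga = -1)"
proof -
  define x where "x = -1 - al"
  define y where "y = -1 - be"
  define z where "z = -1 - ga"
  have x: "x \<ge> 0" and y: "y \<ge> 0" and z: "z \<ge> 0" using a b g by (simp_all add: x_def y_def z_def)
  have al: "al = -1 - x" and be: "be = -1 - y" and ga: "ga = -1 - z" by (simp_all add: x_def y_def z_def)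
  have xy: "x*y \<ge> 0" "y*z \<ge> 0" "x*z \<ge> 0" "x*y*z \<ge> 0" "x*x \<ge> 0" "y*y \<ge> 0" "z*z \<ge> 0"
    using x y z by simp_all
  have dte: "dt = -4 - 4*(x+y+z) - 2*(x*y+y*z+x*z) - 2*(x*y*z) - (x*x+y*y+z*z)"
    unfolding dt_def al be ga by (simp add: power2_eq_square algebra_simps)
  have dt: "dt < 0" using dte xy x y z by (smt (verit))
  have Se: "S + 3*dt = -8*(x+y+z) - 4*(x*y+y*z+x*z) - 4*(x*x+y*y+z*z) - 6*(x*y*z)"
    unfolding S_def dt_def al be ga by (simp add: power2_eq_square algebra_simps)
  have le: "S + 3*dt \<le> 0" using Se xy x y z by (smt (verit))
  have ge: "S / dt \<ge> -3" using le dt by (auto simp: le_divide_eq)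
  have eq: "al = -1 \<and> be = -1 \<and> ga = -1" if "S / dt = -3"
  proof -
    have "S = -3 * dt" using that dt by (simp add: divide_eq_eq)
    then have "x + y + z = 0" using Se xy x y z by (smt (verit))
    then show ?thesis using x y z al be ga by linarith
  qed
  show ?thesis using dt ge eq by blast
qed

lemma span_lemma:
  fixes A B C e f r :: lv
  assumes nA: "Lf A A = 1" and nB: "Lf B B = 1" and nC: "Lf C C = 1"
    and dt: "1 + 2*Lf A B*Lf A C*Lf B C - (Lf A B)^2 - (Lf A C)^2 - (Lf B C)^2 \<noteq> 0"
    and ne: "Lf e e = 1" and nf: "Lf f f = 1" and ef: "Lf e f = 0"
    and eA: "Lf e A = 0" "Lf e B = 0" "Lf e C = 0"
    and fA: "Lf f A = 0" "Lf f B = 0" "Lf f C = 0"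
    and rA: "Lf r A = 0" "Lf r B = 0" "Lf r C = 0" "Lf r e = 0" "Lf r f = 0"
  shows "r = 0"
proof -
  define F where "F = (\<lambda>k::nat. [A, B, C, e, f, r] ! k)"
  obtain c where c: "\<exists>i<6. c i \<noteq> 0" "(\<Sum>i<6. c i *\<^sub>R F i) = 0" using dep6 by blast
  have sum6: "(\<Sum>i<6. c i *\<^sub>R F i) = c 0 *\<^sub>R A + c 1 *\<^sub>R B + c 2 *\<^sub>R C + c 3 *\<^sub>R e + c 4 *\<^sub>R f + c 5 *\<^sub>R r"
    by (simp add: F_def numeral_eq_Suc)
  define s where "s = c 0 *\<^sub>R A + c 1 *\<^sub>R B + c 2 *\<^sub>R C + c 3 *\<^sub>R e + c 4 *\<^sub>R f + c 5 *\<^sub>R r"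
  have s0: "s = 0" using c(2) sum6 s_def by simp
  note sym = Lf_sym
  have "Lf s A = 0" using s0 by (simp add: Lf_zero_left)
  then have e1: "c 0 + Lf A B * c 1 + Lf A C * c 2 = 0"
    unfolding s_def using nA eA fA rA by (simp add: Lf_simps sym[of B A] sym[of C A] algebra_simps)
  have "Lf s B = 0" using s0 by (simp add: Lf_zero_left)
  then have e2: "Lf A B * c 0 + c 1 + Lf B C * c 2 = 0"
    unfolding s_def using nB eA fA rA by (simp add: Lf_simps sym[of C B] algebra_simps)
  have "Lf s C = 0" using s0 by (simp add: Lf_zero_left)
  then have e3: "Lf A C * c 0 + Lf B C * c 1 + c 2 = 0"
    unfolding s_def using nC eA fA rA by (simp add: Lf_simps algebra_simps)
  have c012: "c 0 = 0 \<and> c 1 = 0 \<and> c 2 = 0" using gram3[OF e1 e2 e3 dt] .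
  have "Lf s e = 0" using s0 by (simp add: Lf_zero_left)
  then have c3: "c 3 = 0"
    unfolding s_def using c012 ne ef rA by (simp add: Lf_simps sym[of f e])
  have "Lf s f = 0" using s0 by (simp add: Lf_zero_left)
  then have c4: "c 4 = 0"
    unfolding s_def using c012 nf ef rA by (simp add: Lf_simps sym[of e f])
  have "c 5 \<noteq> 0"
  proof
    assume "c 5 = 0"
    then have "\<forall>i<6. c i = 0" using c012 c3 c4 by (auto simp: less_Suc_eq numeral_eq_Suc)
    then show False using c(1) by blast
  qed
  moreover have "c 5 *\<^sub>R r = 0" using s0 c012 c3 c4 unfolding s_def by simp
  ultimately show "r = 0" by simp
qed


lemma core:
  fixes A B C :: lv and D :: "'a \<Rightarrow> lv"
  assumes fin: "finite V" and card: "card V = 6"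
    and nA: "Lf A A = 1" and nB: "Lf B B = 1" and nC: "Lf C C = 1"
    and ab: "Lf A B \<le> -1" and ac: "Lf A C \<le> -1" and bc: "Lf B C \<le> -1"
    and nD: "\<And>v. v \<in> V \<Longrightarrow> Lf (D v) (D v) = 1"
    and dA: "\<And>v. v \<in> V \<Longrightarrow> Lf (D v) A = -1"
    and dB: "\<And>v. v \<in> V \<Longrightarrow> Lf (D v) B = -1"
    and dC: "\<And>v. v \<in> V \<Longrightarrow> Lf (D v) C = -1"
    and dd: "\<And>v w. v \<in> V \<Longrightarrow> w \<in> V \<Longrightarrow> v \<noteq> w \<Longrightarrow> Lf (D v) (D w) \<le> -1"
  shows "Lf A B = -1 \<and> Lf A C = -1 \<and> Lf B C = -1 \<and>
    (\<exists>g. bij_betw g {..<6} V \<and>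
      (\<forall>i<6. \<forall>j<6. i \<noteq> j \<longrightarrow> (Lf (D (g i)) (D (g j)) = -1 \<longleftrightarrow> cycle_edges 6 i j)))"
proof -
  define al where "al = Lf A B"
  define be where "be = Lf A C"
  define ga where "ga = Lf B C"
  define dt where "dt = 1 + 2*al*be*ga - al^2 - be^2 - ga^2"
  define N1 where "N1 = 1 - ga^2 + be*ga - al + al*ga - be"
  define N2 where "N2 = be*ga - al + 1 - be^2 + al*be - ga"
  define N3 where "N3 = al*ga - be + al*be - ga + 1 - al^2"
  have AF: "dt < 0 \<and> (N1 + N2 + N3) / dt \<ge> -3 \<and>
      ((N1 + N2 + N3) / dt = -3 \<longrightarrow> al = -1 \<and> be = -1 \<and> ga = -1)"
    unfolding dt_def N1_def N2_def N3_def
    by (rule abc_facts) (use ab ac bc in \<open>simp_all add: al_def be_def ga_def\<close>)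
  then have dtn: "dt < 0" by simp
  then have dt0: "dt \<noteq> 0" by simp
  define l1 where "l1 = - N1 / dt"
  define l2 where "l2 = - N2 / dt"
  define l3 where "l3 = - N3 / dt"
  define W where "W = l1 *\<^sub>R A + l2 *\<^sub>R B + l3 *\<^sub>R C"
  have symAB: "Lf B A = al" "Lf C A = be" "Lf C B = ga"
    unfolding al_def be_def ga_def by (simp_all add: Lf_sym)
  have "Lf W A = l1 + al * l2 + be * l3" unfolding W_def using nA symAB by (simp add: Lf_simps)
  also have "\<dots> = - (N1 + al * N2 + be * N3) / dt" unfolding l1_def l2_def l3_def using dt0 by (simp add: field_simps)
  also have "N1 + al * N2 + be * N3 = dt" unfolding N1_def N2_def N3_def dt_def by (simp add: power2_eq_square algebra_simps)
  finally have WA: "Lf W A = -1" using dt0 by simp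
  have "Lf W B = al * l1 + l2 + ga * l3" unfolding W_def using nB symAB al_def ga_def by (simp add: Lf_simps)
  also have "\<dots> = - (al * N1 + N2 + ga * N3) / dt" unfolding l1_def l2_def l3_def using dt0 by (simp add: field_simps)
  also have "al * N1 + N2 + ga * N3 = dt" unfolding N1_def N2_def N3_def dt_def by (simp add: power2_eq_square algebra_simps)
  finally have WB: "Lf W B = -1" using dt0 by simp
  have "Lf W C = be * l1 + ga * l2 + l3" unfolding W_def using nC symAB be_def ga_def by (simp add: Lf_simps)
  also have "\<dots> = - (be * N1 + ga * N2 + N3) / dt" unfolding l1_def l2_def l3_def using dt0 by (simp add: field_simps)
  also have "be * N1 + ga * N2 + N3 = dt" unfolding N1_def N2_def N3_def dt_def by (simp add: power2_eq_square algebra_simps)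
  finally have WC: "Lf W C = -1" using dt0 by simp
  define ww where "ww = Lf W W"
  have ww_eq: "ww = (N1 + N2 + N3) / dt"
  proof -
    have "ww = l1 * Lf A W + l2 * Lf B W + l3 * Lf C W" unfolding ww_def W_def
      by (simp add: Lf_simps Lf_sym[of B A] Lf_sym[of C A] Lf_sym[of C B] algebra_simps)
    also have "\<dots> = - (l1 + l2 + l3)" using WA WB WC by (simp add: Lf_sym)
    also have "\<dots> = (N1 + N2 + N3) / dt" unfolding l1_def l2_def l3_def using dt0 by (simp add: field_simps)
    finally show ?thesis .
  qed
  have ww3: "ww \<ge> -3" using AF ww_eq by simp
  define T where "T = A + B + C"
  have TT: "Lf T T < 0"
  proof -
    have "Lf T T = 3 + 2 * (al + be + ga)" unfolding T_def using nA nB nC symAB al_def be_def ga_def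
      by (simp add: Lf_simps)
    then show ?thesis using ab ac bc unfolding al_def be_def ga_def by simp
  qed
  define U where "U v = D v - W" for v
  have UA: "Lf (U v) A = 0" "Lf (U v) B = 0" "Lf (U v) C = 0" "Lf (U v) T = 0" if "v \<in> V" for v
    using dA[OF that] dB[OF that] dC[OF that] WA WB WC unfolding U_def T_def by (simp_all add: Lf_simps)
  have DW: "Lf (D v) W = ww" if "v \<in> V" for v
  proof -
    have "Lf (D v) W = l1 * Lf (D v) A + l2 * Lf (D v) B + l3 * Lf (D v) C" unfolding W_def by (simp add: Lf_simps)
    also have "\<dots> = - (l1 + l2 + l3)" using dA[OF that] dB[OF that] dC[OF that] by simp
    also have "\<dots> = ww" using ww_eq unfolding l1_def l2_def l3_def using dt0 by (simp add: field_simps)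
    finally show ?thesis .
  qed
  have UU: "Lf (U v) (U w) = Lf (D v) (D w) - ww" if "v \<in> V" "w \<in> V" for v w
  proof -
    have "Lf (U v) (U w) = Lf (D v) (D w) - Lf (D v) W - Lf W (D w) + Lf W W" unfolding U_def by (simp add: Lf_simps)
    also have "Lf W (D w) = ww" using DW[OF that(2)] by (simp add: Lf_sym)
    finally show ?thesis using DW[OF that(1)] ww_def by simp
  qed
  define rho where "rho = 1 - ww"
  have Uvv: "Lf (U v) (U v) = rho" if "v \<in> V" for v using UU[OF that that] nD[OF that] rho_def by simp
  obtain h where h: "bij_betw h {0..<(6::nat)} V" using ex_bij_betw_nat_finite[OF fin] card by auto
  have hV: "h i \<in> V" if "i < 6" for i using h that by (auto simp: bij_betw_def)
  have hd: "h i \<noteq> h j" if "i < 6" "j < 6" "i \<noteq> j" for i j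
    using h that unfolding bij_betw_def inj_on_def by auto
  have rho_pos: "rho > 0"
  proof (rule ccontr)
    assume "\<not> rho > 0"
    moreover have "rho \<ge> 0" using spacelike[OF TT UA(4)[OF hV[of 0]]] Uvv[OF hV[of 0]] by simp
    ultimately have r0: "rho = 0" by simp
    have "U (h 0) = 0" "U (h 1) = 0" using spacelike[OF TT UA(4)[OF hV[of 0]]] spacelike[OF TT UA(4)[OF hV[of 1]]]
      Uvv[OF hV[of 0]] Uvv[OF hV[of 1]] r0 by simp_all
    then have "Lf (U (h 0)) (U (h 1)) = 0" by (simp add: Lf_zero_left)
    then have "Lf (D (h 0)) (D (h 1)) = ww" using UU[OF hV[of 0] hV[of 1]] by simp
    moreover have "Lf (D (h 0)) (D (h 1)) \<le> -1" using dd[OF hV[of 0] hV[of 1] hd[of 0 1]] by simp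
    ultimately show False using r0 rho_def by simp
  qed
  define sr where "sr = sqrt rho"
  have sr: "sr > 0" "sr * sr = rho" using rho_pos unfolding sr_def by simp_all
  define e where "e = (1 / sr) *\<^sub>R U (h 0)"
  have ee: "Lf e e = 1" unfolding e_def using Uvv[OF hV[of 0]] sr rho_pos by (simp add: Lf_simps)
  have eA: "Lf e A = 0" "Lf e B = 0" "Lf e C = 0" "Lf e T = 0"
    unfolding e_def using UA[OF hV[of 0]] by (simp_all add: Lf_simps)
  define fp where "fp v = U v - Lf (U v) e *\<^sub>R e" for v
  have fpA: "Lf (fp v) A = 0" "Lf (fp v) B = 0" "Lf (fp v) C = 0" "Lf (fp v) T = 0" "Lf (fp v) e = 0"
    if "v \<in> V" for v
    unfolding fp_def using UA[OF that] eA ee by (simp_all add: Lf_simps)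
  obtain q where q: "q \<in> V" "fp q \<noteq> 0"
  proof -
    have "\<exists>q\<in>V. fp q \<noteq> 0"
    proof (rule ccontr)
      assume "\<not> (\<exists>q\<in>V. fp q \<noteq> 0)"
      then have z: "fp q = 0" if "q \<in> V" for q using that by blast
      define k where "k i = Lf (U (h i)) e" for i
      have Uk: "U (h i) = k i *\<^sub>R e" if "i < 6" for i
        using z[OF hV[OF that]] unfolding fp_def k_def by simp
      have kk: "k i * k i = rho" if "i < 6" for i
      proof -
        have "rho = Lf (U (h i)) (U (h i))" using Uvv[OF hV[OF that]] by simp
        also have "\<dots> = k i * k i" using Uk[OF that] ee by (simp add: Lf_simps)
        finally show ?thesis by simp
      qed
      have kl: "k i * k j \<le> rho - 2" if "i < 6" "j < 6" "i \<noteq> j" for i j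
      proof -
        have "k i * k j = Lf (U (h i)) (U (h j))" using Uk[OF that(1)] Uk[OF that(2)] ee by (simp add: Lf_simps)
        also have "\<dots> = Lf (D (h i)) (D (h j)) - ww" using UU[OF hV[OF that(1)] hV[OF that(2)]] .
        also have "\<dots> \<le> -1 - ww" using dd[OF hV[OF that(1)] hV[OF that(2)] hd[OF that]] by simp
        finally show ?thesis using rho_def by simp
      qed
      have "k 0 * k 1 < 0" by (rule prod_neg[OF kk kk kl]) simp_all
      moreover have "k 0 * k 2 < 0" by (rule prod_neg[OF kk kk kl]) simp_all
      moreover have "k 1 * k 2 < 0" by (rule prod_neg[OF kk kk kl]) simp_all
      ultimately show False by (rule three_neg)
    qed
    then show ?thesis using that by blast
  qed
  have fpp: "Lf (fp q) (fp q) > 0"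
    using spacelike[OF TT fpA(4)[OF q(1)]] q(2) by (metis order_le_less)
  define sf where "sf = sqrt (Lf (fp q) (fp q))"
  have sf: "sf > 0" "sf * sf = Lf (fp q) (fp q)" using fpp unfolding sf_def by simp_all
  define f where "f = (1 / sf) *\<^sub>R fp q"
  have ff: "Lf f f = 1" unfolding f_def using sf fpp by (simp add: Lf_simps)
  have fA: "Lf f A = 0" "Lf f B = 0" "Lf f C = 0" "Lf f e = 0"
    unfolding f_def using fpA[OF q(1)] by (simp_all add: Lf_simps)
  have ef: "Lf e f = 0" using fA(4) by (simp add: Lf_sym)
  have dtL: "1 + 2*Lf A B*Lf A C*Lf B C - (Lf A B)^2 - (Lf A C)^2 - (Lf B C)^2 \<noteq> 0"
    using dt0 unfolding dt_def al_def be_def ga_def .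
  have span: "U v = Lf (U v) e *\<^sub>R e + Lf (U v) f *\<^sub>R f" if "v \<in> V" for v
  proof -
    define r where "r = U v - Lf (U v) e *\<^sub>R e - Lf (U v) f *\<^sub>R f"
    have "r = 0"
    proof (rule span_lemma[OF nA nB nC dtL ee ff ef eA(1-3) fA(1-3)])
      show "Lf r A = 0" "Lf r B = 0" "Lf r C = 0"
        unfolding r_def using UA[OF that] eA fA by (simp_all add: Lf_simps)
      show "Lf r e = 0" unfolding r_def using ee fA by (simp add: Lf_simps Lf_sym[of f e])
      show "Lf r f = 0" unfolding r_def using ff ef by (simp add: Lf_simps)
    qed
    then show ?thesis unfolding r_def by (simp add: algebra_simps)
  qed
  define X where "X v = Lf (U v) e / sr" for v
  define Y where "Y v = Lf (U v) f / sr" for v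
  have UUc: "Lf (U v) (U w) = rho * (X v * X w + Y v * Y w)" if "v \<in> V" "w \<in> V" for v w
  proof -
    define a where "a = Lf (U w) e"
    define b where "b = Lf (U w) f"
    have Uw: "U w = a *\<^sub>R e + b *\<^sub>R f" using span[OF that(2)] unfolding a_def b_def .
    have "Lf (U v) (U w) = Lf (U v) (a *\<^sub>R e + b *\<^sub>R f)" by (simp only: Uw)
    also have "\<dots> = a * Lf (U v) e + b * Lf (U v) f" by (simp add: Lf_simps)
    finally have "Lf (U v) (U w) = Lf (U v) e * Lf (U w) e + Lf (U v) f * Lf (U w) f"
      unfolding a_def b_def by (simp add: algebra_simps)
    also have "\<dots> = (sr * sr) * (X v * X w + Y v * Y w)" unfolding X_def Y_def using sr rho_pos by (simp add: field_simps)
    finally show ?thesis using sr by simp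
  qed
  have XY1: "(X v)^2 + (Y v)^2 = 1" if "v \<in> V" for v
  proof -
    have "rho = rho * (X v * X v + Y v * Y v)" using UUc[OF that that] Uvv[OF that] by simp
    then show ?thesis using rho_pos by (simp add: power2_eq_square)
  qed
  define th where "th v = (SOME t. 0 \<le> t \<and> t < 2*pi \<and> X v = cos t \<and> Y v = sin t)" for v
  have th: "0 \<le> th v \<and> th v < 2*pi \<and> X v = cos (th v) \<and> Y v = sin (th v)" if vV: "v \<in> V" for v
  proof -
    obtain t where "0 \<le> t" "t < 2*pi" "X v = cos t" "Y v = sin t" using sincos_total_2pi[OF XY1[OF vV]] by blast
    then have "\<exists>t. 0 \<le> t \<and> t < 2*pi \<and> X v = cos t \<and> Y v = sin t" by blast
    then show ?thesis unfolding th_def by (rule someI_ex)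
  qed
  have costh: "cos (th v - th w) = (Lf (D v) (D w) - ww) / rho" if "v \<in> V" "w \<in> V" for v w
  proof -
    have "cos (th v - th w) = X v * X w + Y v * Y w" using th[OF that(1)] th[OF that(2)] by (simp add: cos_diff)
    also have "\<dots> = Lf (U v) (U w) / rho" using UUc[OF that] rho_pos by simp
    finally show ?thesis using UU[OF that] by simp
  qed
  have half: "cos (th v - th w) \<le> 1/2" if "v \<in> V" "w \<in> V" "v \<noteq> w" for v w
  proof -
    have "(Lf (D v) (D w) - ww) / rho \<le> (-1 - ww) / rho" using dd[OF that] rho_pos by (simp add: divide_right_mono)
    also have "\<dots> \<le> 1/2" using ww3 rho_pos unfolding rho_def by (simp add: divide_le_eq)
    finally show ?thesis using costh[OF that(1,2)] by simp
  qed
  obtain g where g: "bij_betw g {..<6} V"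
    and gc: "\<forall>i<6. \<forall>j<6. cos (th (g i) - th (g j)) = cos ((real i - real j) * pi / 3)"
    using circle6[OF fin card, of th] th half by blast
  have gV: "g i \<in> V" if "i < 6" for i using g that by (auto simp: bij_betw_def)
  have gd: "g i \<noteq> g j" if "i < 6" "j < 6" "i \<noteq> j" for i j
    using g that unfolding bij_betw_def inj_on_def by auto
  have c01: "cos ((real 0 - real 1) * pi / 3) = 1/2"
    using cos_table[of 0 1] by (simp add: cycle_edges_def)
  have "(Lf (D (g 0)) (D (g 1)) - ww) / rho = 1/2"
    using costh[OF gV gV, of 0 1] gc c01 by simp
  then have "2 * Lf (D (g 0)) (D (g 1)) - 2 * ww = rho" using rho_pos by (simp add: divide_eq_eq algebra_simps)
  moreover have "Lf (D (g 0)) (D (g 1)) \<le> -1" using dd[OF gV gV gd, of 0 1] by simp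
  ultimately have "ww \<le> -3" unfolding rho_def by linarith
  then have ww_3: "ww = -3" using ww3 by simp
  then have abc: "al = -1 \<and> be = -1 \<and> ga = -1" using AF ww_eq by simp
  have rho4: "rho = 4" using ww_3 rho_def by simp
  have edges: "\<forall>i<6. \<forall>j<6. i \<noteq> j \<longrightarrow> (Lf (D (g i)) (D (g j)) = -1 \<longleftrightarrow> cycle_edges 6 i j)"
  proof (intro allI impI)
    fix i j :: nat assume ij: "i < 6" "j < 6" "i \<noteq> j"
    have "Lf (D (g i)) (D (g j)) = -3 + 4 * cos ((real i - real j) * pi / 3)"
      using costh[OF gV[OF ij(1)] gV[OF ij(2)]] gc ij ww_3 rho4 by (simp add: divide_eq_eq algebra_simps)
    then show "Lf (D (g i)) (D (g j)) = -1 \<longleftrightarrow> cycle_edges 6 i j"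
      using cos_table[OF ij] by auto
  qed
  show ?thesis using abc edges g unfolding al_def be_def ga_def by blast
qed

definition vec3 :: "real \<Rightarrow> real \<Rightarrow> real \<Rightarrow> real^3" where
  "vec3 a b c = vector [a, b, c]"

lemma inner_vec3: "inner (vec3 a b c) (vec3 d e f) = a*d + b*e + c*f"
  unfolding vec3_def by (simp add: inner_vec_def sum_3)

lemma vec3_diff: "vec3 a b c - vec3 d e f = vec3 (a-d) (b-e) (c-f)"
  unfolding vec3_def by (simp add: vec_eq_iff forall_3)

lemma dist_vec3_sq: "(dist (vec3 a b c) (vec3 d e f))^2 = (a-d)^2 + (b-e)^2 + (c-f)^2"
  unfolding dist_norm power2_norm_eq_inner vec3_diff inner_vec3 by (simp add: power2_eq_square)

lemma norm_vec3_sq: "(norm (vec3 a b c))^2 = a^2 + b^2 + c^2"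
  unfolding power2_norm_eq_inner inner_vec3 by (simp add: power2_eq_square)

lemma vec3_zero: "vec3 0 0 0 = 0"
  unfolding vec3_def by (simp add: vec_eq_iff forall_3)


definition pt :: "nat \<Rightarrow> real^3" where
  "pt k = vec3 (2 * cos (real k * pi / 3)) (2 * sin (real k * pi / 3)) 1"

definition e3 :: "real^3" where "e3 = vec3 0 0 1"
definition m3 :: "real^3" where "m3 = vec3 0 0 (-1)"

fun fB :: "nat + nat \<Rightarrow> ball3" where
  "fB (Inl k) = Ball (pt k) 1"
| "fB (Inr k) = (if k = 0 then Half e3 0 else if k = 1 then Half m3 (-2) else Ball e3 1)"

lemma norm_e3: "norm e3 = 1" and norm_m3: "norm m3 = 1"
proof -
  have "(norm e3)^2 = 1" unfolding e3_def norm_vec3_sq by simp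
  then show "norm e3 = 1" using power2_eq_imp_eq[of "norm e3" 1] by simp
  have "(norm m3)^2 = 1" unfolding m3_def norm_vec3_sq by simp
  then show "norm m3 = 1" using power2_eq_imp_eq[of "norm m3" 1] by simp
qed

lemma e3_ne: "e3 \<noteq> 0" and m3_ne: "m3 \<noteq> 0" using norm_e3 norm_m3 by auto

lemma m3_eq: "m3 = - e3" unfolding m3_def e3_def vec3_def by (simp add: vec_eq_iff forall_3)

lemma inner_e3_pt: "inner e3 (pt k) = 1" unfolding e3_def pt_def inner_vec3 by simp
lemma inner_m3_pt: "inner m3 (pt k) = -1" unfolding m3_def pt_def inner_vec3 by simp
lemma inner_e3_e3: "inner e3 e3 = 1" unfolding e3_def inner_vec3 by simp
lemma inner_m3_e3: "inner m3 e3 = -1" unfolding e3_def m3_def inner_vec3 by simp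

lemma dist_pt_e3: "dist (pt k) e3 = 2"
proof -
  have "(dist (pt k) e3)^2 = 4 * ((cos (real k * pi / 3))^2 + (sin (real k * pi / 3))^2)"
    unfolding pt_def e3_def dist_vec3_sq
    by (simp add: power2_eq_square algebra_simps del: sin_cos_squared_add sin_cos_squared_add2 sin_cos_squared_add3)
  also have "\<dots> = 4" by simp
  finally show ?thesis using power2_eq_imp_eq[of "dist (pt k) e3" 2] by simp
qed

lemma dist_pt_sq: "(dist (pt k) (pt l))^2 = 8 - 8 * cos ((real k - real l) * pi / 3)"
proof -
  define a where "a = real k * pi / 3"
  define b where "b = real l * pi / 3"
  have ab: "(real k - real l) * pi / 3 = a - b" unfolding a_def b_def by (simp add: field_simps)
  have "(dist (pt k) (pt l))^2 = (2 * cos a - 2 * cos b)^2 + (2 * sin a - 2 * sin b)^2"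
    unfolding pt_def dist_vec3_sq a_def b_def by simp
  also have "\<dots> = 4 * ((cos a)^2 + (sin a)^2) + 4 * ((cos b)^2 + (sin b)^2) - 8 * (cos a * cos b + sin a * sin b)"
    by (simp add: power2_eq_square algebra_simps del: sin_cos_squared_add sin_cos_squared_add2 sin_cos_squared_add3)
  also have "\<dots> = 8 - 8 * cos (a - b)" by (simp add: cos_diff)
  finally show ?thesis unfolding ab .
qed

lemma dist_pt_adj: "k < 6 \<Longrightarrow> l < 6 \<Longrightarrow> k \<noteq> l \<Longrightarrow> cycle_edges 6 k l \<Longrightarrow> dist (pt k) (pt l) = 2"
proof -
  assume kl: "k < 6" "l < 6" "k \<noteq> l" "cycle_edges 6 k l"
  have "cos ((real k - real l) * pi / 3) = 1/2" using cos_table[OF kl(1-3)] kl(4) by simp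
  then have "(dist (pt k) (pt l))^2 = 2^2" using dist_pt_sq[of k l] by simp
  then show ?thesis using power2_eq_imp_eq[of "dist (pt k) (pt l)" 2] by simp
qed

lemma dist_pt_nadj: "k < 6 \<Longrightarrow> l < 6 \<Longrightarrow> k \<noteq> l \<Longrightarrow> \<not> cycle_edges 6 k l \<Longrightarrow> dist (pt k) (pt l) > 2"
proof -
  assume kl: "k < 6" "l < 6" "k \<noteq> l" "\<not> cycle_edges 6 k l"
  have "cos ((real k - real l) * pi / 3) < 1/2" using cos_table[OF kl(1-3)] kl(4) by simp
  then have "(dist (pt k) (pt l))^2 > 2^2" using dist_pt_sq[of k l] by simp
  then show ?thesis by (rule power_less_imp_less_base) simp
qed

definition PP :: "nat + nat \<Rightarrow> nat + nat \<Rightarrow> bool" where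
  "PP x y \<longleftrightarrow> disj (fB x) (fB y) \<and>
     (join_edges (cycle_verts 6) (cycle_edges 6) (cycle_verts 3) (cycle_edges 3) x y \<longleftrightarrow> tangent (fB x) (fB y)) \<and>
     ball_set (fB x) \<noteq> ball_set (fB y)"

lemma cycle_edges_sym: "cycle_edges n x y \<longleftrightarrow> cycle_edges n y x"
  unfolding cycle_edges_def by auto

lemma join_edges_sym:
  assumes "\<And>x y. E x y \<longleftrightarrow> E y x" "\<And>x y. F x y \<longleftrightarrow> F y x"
  shows "join_edges V E W F x y \<longleftrightarrow> join_edges V E W F y x"
  using assms by (cases x; cases y) auto

lemma PP_sym: "PP x y \<Longrightarrow> PP y x"
  unfolding PP_def using disj_sym tangent_sym
    join_edges_sym[of "cycle_edges 6" "cycle_edges 3" "cycle_verts 6" "cycle_verts 3" x y]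
    cycle_edges_sym by metis

lemma neq_BB: "r1 > 0 \<Longrightarrow> r2 > 0 \<Longrightarrow> disj (Ball c1 r1) (Ball c2 r2) \<Longrightarrow> ball_set (Ball c1 r1) \<noteq> ball_set (Ball c2 r2)"
proof
  assume r: "r1 > 0" "r2 > 0" and d: "disj (Ball c1 r1) (Ball c2 r2)"
    and eq: "ball_set (Ball c1 r1) = ball_set (Ball c2 r2)"
  have "Some c1 \<in> ball_set (Ball c1 r1)" using r by simp
  then have "Some c1 \<in> ball_set (Ball c2 r2)" using eq by simp
  then have "dist c2 c1 \<le> r2" by auto
  moreover have "r1 + r2 \<le> dist c1 c2" using BB_disj[OF r] d by simp
  ultimately show False using r by (simp add: dist_commute)
qed

lemma neq_BH: "ball_set (Ball c r) \<noteq> ball_set (Half a b)"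
proof
  assume "ball_set (Ball c r) = ball_set (Half a b)"
  moreover have "None \<in> ball_set (Half a b)" by simp
  ultimately show False by auto
qed

lemma PP_ll: "k < 6 \<Longrightarrow> l < 6 \<Longrightarrow> k \<noteq> l \<Longrightarrow> PP (Inl k) (Inl l)"
proof -
  assume kl: "k < 6" "l < 6" "k \<noteq> l"
  have d2: "2 \<le> dist (pt k) (pt l)"
    using dist_pt_adj[OF kl] dist_pt_nadj[OF kl] by (cases "cycle_edges 6 k l") auto
  have dj: "disj (Ball (pt k) 1) (Ball (pt l) 1)" using BB_disj[of 1 1 "pt k" "pt l"] d2 by simp
  have tg: "tangent (Ball (pt k) 1) (Ball (pt l) 1) \<longleftrightarrow> cycle_edges 6 k l"
    using BB_tang[of 1 1 "pt k" "pt l"] d2 dist_pt_adj[OF kl] dist_pt_nadj[OF kl]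
    by (cases "cycle_edges 6 k l") auto
  show ?thesis unfolding PP_def using dj tg neq_BB[OF _ _ dj] by simp
qed

lemma PP_l0: assumes "k < 6" shows "PP (Inl k) (Inr 0)"
proof -
  have dj: "disj (Ball (pt k) 1) (Half e3 0)" using BH_disj[of 1 e3 "pt k" 0] e3_ne norm_e3 inner_e3_pt by simp
  have tg: "tangent (Ball (pt k) 1) (Half e3 0)" using BH_tang[of 1 e3 "pt k" 0] e3_ne norm_e3 inner_e3_pt by simp
  show ?thesis unfolding PP_def using dj tg neq_BH \<open>k < 6\<close> by (simp add: cycle_verts_def)
qed

lemma PP_l1: assumes "k < 6" shows "PP (Inl k) (Inr 1)"
proof -
  have dj: "disj (Ball (pt k) 1) (Half m3 (-2))" using BH_disj[of 1 m3 "pt k" "-2"] m3_ne norm_m3 inner_m3_pt by simp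
  have tg: "tangent (Ball (pt k) 1) (Half m3 (-2))" using BH_tang[of 1 m3 "pt k" "-2"] m3_ne norm_m3 inner_m3_pt by simp
  show ?thesis unfolding PP_def using dj tg neq_BH \<open>k < 6\<close> by (simp add: cycle_verts_def)
qed

lemma PP_l2: assumes "k < 6" shows "PP (Inl k) (Inr 2)"
proof -
  have dj: "disj (Ball (pt k) 1) (Ball e3 1)" using BB_disj[of 1 1 "pt k" e3] dist_pt_e3 by simp
  have tg: "tangent (Ball (pt k) 1) (Ball e3 1)" using BB_tang[of 1 1 "pt k" e3] dist_pt_e3 by simp
  show ?thesis unfolding PP_def using dj tg neq_BB[OF _ _ dj] \<open>k < 6\<close> by (simp add: cycle_verts_def)
qed

lemma sgn_m3: "sgn m3 = - sgn e3"
  unfolding m3_eq by (simp add: sgn_minus)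

lemma PP_01: "PP (Inr 0) (Inr 1)"
proof -
  have dj: "disj (Half e3 0) (Half m3 (-2))" using HH_disj[OF e3_ne m3_ne, of 0 "-2"] sgn_m3 norm_m3 by simp
  have tg: "tangent (Half e3 0) (Half m3 (-2))" using HH_tang[OF e3_ne m3_ne, of 0 "-2"] sgn_m3 norm_m3 by simp
  have ne: "ball_set (Half e3 0) \<noteq> ball_set (Half m3 (-2))"
  proof
    assume eq: "ball_set (Half e3 0) = ball_set (Half m3 (-2))"
    have a1: "Some 0 \<in> ball_set (Half e3 0)" by simp
    have a2: "Some 0 \<notin> ball_set (Half m3 (-2))" by auto
    show False using eq a1 a2 by blast
  qed
  show ?thesis unfolding PP_def using dj tg ne by (simp add: cycle_verts_def cycle_edges_def)
qed

lemma PP_02: "PP (Inr 0) (Inr 2)"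
proof -
  have dj: "disj (Ball e3 1) (Half e3 0)" using BH_disj[of 1 e3 e3 0] e3_ne norm_e3 inner_e3_e3 by simp
  have tg: "tangent (Ball e3 1) (Half e3 0)" using BH_tang[of 1 e3 e3 0] e3_ne norm_e3 inner_e3_e3 by simp
  have "PP (Inr 2) (Inr 0)" unfolding PP_def using dj tg neq_BH by (simp add: cycle_verts_def cycle_edges_def)
  then show ?thesis by (rule PP_sym)
qed

lemma PP_12: "PP (Inr 1) (Inr 2)"
proof -
  have dj: "disj (Ball e3 1) (Half m3 (-2))" using BH_disj[of 1 m3 e3 "-2"] m3_ne norm_m3 inner_m3_e3 by simp
  have tg: "tangent (Ball e3 1) (Half m3 (-2))" using BH_tang[of 1 m3 e3 "-2"] m3_ne norm_m3 inner_m3_e3 by simp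
  have "PP (Inr 2) (Inr 1)" unfolding PP_def using dj tg neq_BH by (simp add: cycle_verts_def cycle_edges_def)
  then show ?thesis by (rule PP_sym)
qed

lemma PP_all:
  assumes "x \<in> join_verts (cycle_verts 6) (cycle_verts 3)" "y \<in> join_verts (cycle_verts 6) (cycle_verts 3)" "x \<noteq> y"
  shows "PP x y"
proof -
  have r: "(\<exists>k<6. x = Inl k) \<or> x = Inr 0 \<or> x = Inr 1 \<or> x = Inr 2"
    using assms(1) unfolding join_verts_def cycle_verts_def by (auto simp: less_Suc_eq numeral_eq_Suc)
  have s: "(\<exists>k<6. y = Inl k) \<or> y = Inr 0 \<or> y = Inr 1 \<or> y = Inr 2"
    using assms(2) unfolding join_verts_def cycle_verts_def by (auto simp: less_Suc_eq numeral_eq_Suc)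
  show ?thesis
    using r s assms(3) PP_ll PP_l0 PP_l1 PP_l2 PP_01 PP_02 PP_12 PP_sym by auto
qed

lemma valid_fB: "valid_ball (fB x)"
  by (cases x) (auto simp: valid_ball_def e3_ne m3_ne)

lemma C63_packable:
  "ball_packable (join_verts (cycle_verts 6) (cycle_verts 3))
     (join_edges (cycle_verts 6) (cycle_edges 6) (cycle_verts 3) (cycle_edges 3))"
  unfolding ball_packable_def
proof (intro exI[of _ fB] conjI ballI impI)
  fix v assume "v \<in> join_verts (cycle_verts 6) (cycle_verts 3)"
  show "valid_ball (fB v)" by (rule valid_fB)
next
  show "inj_on (\<lambda>v. ball_set (fB v)) (join_verts (cycle_verts 6) (cycle_verts 3))"
    using PP_all unfolding inj_on_def PP_def by blast
next
  fix v w assume "v \<in> join_verts (cycle_verts 6) (cycle_verts 3)" "w \<in> join_verts (cycle_verts 6) (cycle_verts 3)" "v \<noteq> w"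
  then show "ball_interior (fB v) \<inter> ball_interior (fB w) = {}"
    using PP_all unfolding PP_def disj_def by blast
next
  fix v w assume "v \<in> join_verts (cycle_verts 6) (cycle_verts 3)" "w \<in> join_verts (cycle_verts 6) (cycle_verts 3)" "v \<noteq> w"
  then show "join_edges (cycle_verts 6) (cycle_edges 6) (cycle_verts 3) (cycle_edges 3) v w = tangent (fB v) (fB w)"
    using PP_all unfolding PP_def by blast
qed

lemma transport:
  assumes iso: "graph_iso V E W F" and bp: "ball_packable W F"
  shows "ball_packable V E"
proof -
  have "\<exists>h. bij_betw h V W \<and> (\<forall>x\<in>V. \<forall>y\<in>V. E x y \<longleftrightarrow> F (h x) (h y))"
    using iso unfolding graph_iso_def .
  then obtain h where hh: "bij_betw h V W \<and> (\<forall>x\<in>V. \<forall>y\<in>V. E x y \<longleftrightarrow> F (h x) (h y))"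
    by (rule exE)
  have h: "bij_betw h V W" using hh by (rule conjunct1)
  have he: "\<forall>x\<in>V. \<forall>y\<in>V. E x y \<longleftrightarrow> F (h x) (h y)" using hh by (rule conjunct2)
  obtain f where ff: "(\<forall>v\<in>W. valid_ball (f v)) \<and> inj_on (\<lambda>v. ball_set (f v)) W \<and>
      (\<forall>v\<in>W. \<forall>w\<in>W. v \<noteq> w \<longrightarrow> ball_interior (f v) \<inter> ball_interior (f w) = {}) \<and>
      (\<forall>v\<in>W. \<forall>w\<in>W. v \<noteq> w \<longrightarrow> (F v w \<longleftrightarrow> tangent (f v) (f w)))"
    using bp unfolding ball_packable_def by (rule exE)
  have fv: "\<forall>v\<in>W. valid_ball (f v)" using ff by (rule conjunct1)
  have fi: "inj_on (\<lambda>v. ball_set (f v)) W" using ff by simp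
  have fd: "\<forall>v\<in>W. \<forall>w\<in>W. v \<noteq> w \<longrightarrow> ball_interior (f v) \<inter> ball_interior (f w) = {}"
    using ff by simp
  have fe: "\<forall>v\<in>W. \<forall>w\<in>W. v \<noteq> w \<longrightarrow> (F v w \<longleftrightarrow> tangent (f v) (f w))"
    using ff by simp
  have hW: "h x \<in> W" if "x \<in> V" for x using h that by (auto simp: bij_betw_def)
  have hi: "h x \<noteq> h y" if "x \<in> V" "y \<in> V" "x \<noteq> y" for x y
    using h that unfolding bij_betw_def inj_on_def by auto
  show ?thesis unfolding ball_packable_def
  proof (intro exI[of _ "\<lambda>v. f (h v)"] conjI ballI impI)
    fix v assume v: "v \<in> V"
    show "valid_ball (f (h v))" using bspec[OF fv hW[OF v]] .
  next
    show "inj_on (\<lambda>v. ball_set (f (h v))) V"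
    proof (rule inj_onI)
      fix x y assume x: "x \<in> V" and y: "y \<in> V" and eq: "ball_set (f (h x)) = ball_set (f (h y))"
      have "h x = h y" using inj_onD[OF fi _ hW[OF x] hW[OF y]] eq by simp
      then show "x = y" using hi[OF x y] by (cases "x = y") auto
    qed
  next
    fix v w assume v: "v \<in> V" and w: "w \<in> V" and vw: "v \<noteq> w"
    have "\<forall>w'\<in>W. h v \<noteq> w' \<longrightarrow> ball_interior (f (h v)) \<inter> ball_interior (f w') = {}"
      using bspec[OF fd hW[OF v]] .
    then show "ball_interior (f (h v)) \<inter> ball_interior (f (h w)) = {}"
      using hW[OF w] hi[OF v w vw] by simp
  next
    fix v w assume v: "v \<in> V" and w: "w \<in> V" and vw: "v \<noteq> w"
    have "\<forall>w'\<in>W. h v \<noteq> w' \<longrightarrow> (F (h v) w' \<longleftrightarrow> tangent (f (h v)) (f w'))"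
      using bspec[OF fe hW[OF v]] .
    then have "F (h v) (h w) \<longleftrightarrow> tangent (f (h v)) (f (h w))" using hW[OF w] hi[OF v w vw] by simp
    moreover have "E v w \<longleftrightarrow> F (h v) (h w)" using he v w by simp
    ultimately show "E v w = tangent (f (h v)) (f (h w))" by simp
  qed
qed

lemma join_iso:
  assumes p: "bij_betw p V W" and q: "bij_betw q V' W'"
    and pe: "\<forall>x\<in>V. \<forall>y\<in>V. E x y \<longleftrightarrow> F (p x) (p y)"
    and qe: "\<forall>x\<in>V'. \<forall>y\<in>V'. E' x y \<longleftrightarrow> F' (q x) (q y)"
  shows "graph_iso (join_verts V V') (join_edges V E V' E') (join_verts W W') (join_edges W F W' F')"
  unfolding graph_iso_def
proof (intro exI[of _ "map_sum p q"] conjI ballI)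
  have pV: "p x \<in> W" if "x \<in> V" for x using p that by (auto simp: bij_betw_def)
  have qV: "q x \<in> W'" if "x \<in> V'" for x using q that by (auto simp: bij_betw_def)
  show "bij_betw (map_sum p q) (join_verts V V') (join_verts W W')"
    unfolding bij_betw_def join_verts_def
  proof
    have ip: "inj_on p V" and iq: "inj_on q V'" using p q by (auto simp: bij_betw_def)
    show "inj_on (map_sum p q) (Inl ` V \<union> Inr ` V')"
    proof (rule inj_onI)
      fix x y assume x: "x \<in> Inl ` V \<union> Inr ` V'" and y: "y \<in> Inl ` V \<union> Inr ` V'"
        and e: "map_sum p q x = map_sum p q y"
      show "x = y"
      proof (cases x)
        case (Inl a)
        with x have a: "a \<in> V" by auto
        show ?thesis
        proof (cases y)
          case (Inl b)
          with y have b: "b \<in> V" by auto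
          from e Inl \<open>x = Inl a\<close> have "p a = p b" by simp
          then have "a = b" using inj_onD[OF ip _ a b] by blast
          then show ?thesis using Inl \<open>x = Inl a\<close> by simp
        next
          case (Inr b)
          then show ?thesis using e \<open>x = Inl a\<close> by simp
        qed
      next
        case (Inr a)
        with x have a: "a \<in> V'" by auto
        show ?thesis
        proof (cases y)
          case (Inl b)
          then show ?thesis using e \<open>x = Inr a\<close> by simp
        next
          case (Inr b)
          with y have b: "b \<in> V'" by auto
          from e Inr \<open>x = Inr a\<close> have "q a = q b" by simp
          then have "a = b" using inj_onD[OF iq _ a b] by blast
          then show ?thesis using Inr \<open>x = Inr a\<close> by simp
        qed
      qed
    qed
    have "map_sum p q ` (Inl ` V \<union> Inr ` V') = Inl ` (p ` V) \<union> Inr ` (q ` V')"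
      by (simp add: image_Un image_image)
    also have "\<dots> = Inl ` W \<union> Inr ` W'" using p q by (simp add: bij_betw_def)
    finally show "map_sum p q ` (Inl ` V \<union> Inr ` V') = Inl ` W \<union> Inr ` W'" .
  qed
  fix x y assume x: "x \<in> join_verts V V'" and y: "y \<in> join_verts V V'"
  show "join_edges V E V' E' x y = join_edges W F W' F' (map_sum p q x) (map_sum p q y)"
  proof (cases x)
    case (Inl a)
    with x have a: "a \<in> V" unfolding join_verts_def by auto
    show ?thesis
    proof (cases y)
      case (Inl b)
      with y have b: "b \<in> V" unfolding join_verts_def by auto
      show ?thesis using pe a b \<open>x = Inl a\<close> Inl by simp
    next
      case (Inr b)
      with y have b: "b \<in> V'" unfolding join_verts_def by auto
      show ?thesis using a b pV[OF a] qV[OF b] \<open>x = Inl a\<close> Inr by simp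
    qed
  next
    case (Inr a)
    with x have a: "a \<in> V'" unfolding join_verts_def by auto
    show ?thesis
    proof (cases y)
      case (Inl b)
      with y have b: "b \<in> V" unfolding join_verts_def by auto
      show ?thesis using a b pV[OF b] qV[OF a] \<open>x = Inr a\<close> Inl by simp
    next
      case (Inr b)
      with y have b: "b \<in> V'" unfolding join_verts_def by auto
      show ?thesis using qe a b \<open>x = Inr a\<close> Inr by simp
    qed
  qed
qed

lemma cycle3:
  assumes "i < 3" "j < 3" shows "cycle_edges 3 i j \<longleftrightarrow> i \<noteq> j"
proof -
  have i: "i = 0 \<or> i = 1 \<or> i = 2" using assms(1) by linarith
  have j: "j = 0 \<or> j = 1 \<or> j = 2" using assms(2) by linarith
  show ?thesis using i j by (elim disjE) (simp_all add: cycle_edges_def)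
qed

lemma forward:
  fixes V6 :: "'a set" and E6 :: "'a \<Rightarrow> 'a \<Rightarrow> bool"
    and V3 :: "'b set" and E3 :: "'b \<Rightarrow> 'b \<Rightarrow> bool"
  assumes s6: "simple_graph V6 E6" and c6: "card V6 = 6"
    and s3: "simple_graph V3 E3" and c3: "card V3 = 3"
    and bp: "ball_packable (join_verts V6 V3) (join_edges V6 E6 V3 E3)"
  shows "graph_iso (join_verts V6 V3) (join_edges V6 E6 V3 E3)
           (join_verts (cycle_verts 6) (cycle_verts 3))
           (join_edges (cycle_verts 6) (cycle_edges 6) (cycle_verts 3) (cycle_edges 3))"
proof -
  define J where "J = join_verts V6 V3"
  obtain f where ff: "(\<forall>v\<in>J. valid_ball (f v)) \<and> inj_on (\<lambda>v. ball_set (f v)) J \<and>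
      (\<forall>v\<in>J. \<forall>w\<in>J. v \<noteq> w \<longrightarrow> ball_interior (f v) \<inter> ball_interior (f w) = {}) \<and>
      (\<forall>v\<in>J. \<forall>w\<in>J. v \<noteq> w \<longrightarrow> (join_edges V6 E6 V3 E3 v w \<longleftrightarrow> tangent (f v) (f w)))"
    using bp unfolding ball_packable_def J_def by (rule exE)
  have fv: "\<forall>v\<in>J. valid_ball (f v)" using ff by (rule conjunct1)
  have fd: "\<forall>v\<in>J. \<forall>w\<in>J. v \<noteq> w \<longrightarrow> ball_interior (f v) \<inter> ball_interior (f w) = {}"
    using ff by simp
  have fe: "\<forall>v\<in>J. \<forall>w\<in>J. v \<noteq> w \<longrightarrow> (join_edges V6 E6 V3 E3 v w \<longleftrightarrow> tangent (f v) (f w))"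
    using ff by simp
  have gd: "good (f v) (f w)" if "v \<in> J" "w \<in> J" "v \<noteq> w" for v w
    using pair_good fv fd that unfolding disj_def by blast
  define L where "L x y = Lf (lor (f x)) (lor (f y))" for x y
  have Lsym: "L x y = L y x" for x y unfolding L_def by (rule Lf_sym)
  have Lself: "L x x = 1" if "x \<in> J" for x using L_self fv that unfolding L_def by blast
  have Lle: "L x y \<le> -1" if "x \<in> J" "y \<in> J" "x \<noteq> y" for x y
    using gd[OF that] unfolding good_def L_def by blast
  have nc: "lor (f x) \<noteq> - lor (f y)" if "x \<in> J" "y \<in> J" "z \<in> J" "x \<noteq> z" "y \<noteq> z" for x y z
  proof
    assume eq: "lor (f x) = - lor (f y)"
    have "L z x \<le> -1" "L z y \<le> -1" using Lle that by auto
    moreover have "L z x = - L z y" unfolding L_def eq by (simp add: Lf_minus_right)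
    ultimately show False by simp
  qed
  have tgI: "tangent (f x) (f y) \<longleftrightarrow> L x y = -1"
    if "x \<in> J" "y \<in> J" "x \<noteq> y" "z \<in> J" "x \<noteq> z" "y \<noteq> z" for x y z
    using gd[OF that(1-3)] nc[OF that(1,2,4,5,6)] unfolding good_def L_def by blast
  have fin6: "finite V6" using s6 unfolding simple_graph_def by blast
  have fin3: "finite V3" using s3 unfolding simple_graph_def by blast
  have "\<exists>x y z. V3 = {x, y, z} \<and> x \<noteq> y \<and> y \<noteq> z \<and> x \<noteq> z"
    using c3 by (simp only: card_3_iff)
  then obtain a b c where abc0: "V3 = {a, b, c} \<and> a \<noteq> b \<and> b \<noteq> c \<and> a \<noteq> c"
    by (elim exE)
  have V3: "V3 = {a, b, c}" and abc: "a \<noteq> b" "b \<noteq> c" "a \<noteq> c" using abc0 by simp_all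
  have inl: "Inl v \<in> J" if "v \<in> V6" for v using that unfolding J_def join_verts_def by blast
  have inr: "Inr x \<in> J" if "x \<in> V3" for x using that unfolding J_def join_verts_def by blast
  have aV: "a \<in> V3" "b \<in> V3" "c \<in> V3" using V3 by auto
  have "V6 \<noteq> {}" using c6 by (metis card.empty zero_neq_numeral)
  then obtain v0 where v0: "v0 \<in> V6" by (meson ex_in_conv)
  have lr: "L (Inl v) (Inr x) = -1" if "v \<in> V6" "x \<in> V3" for v x
  proof -
    have "join_edges V6 E6 V3 E3 (Inl v) (Inr x)" using that by simp
    moreover have "Inl v \<noteq> Inr x \<longrightarrow> (join_edges V6 E6 V3 E3 (Inl v) (Inr x) \<longleftrightarrow> tangent (f (Inl v)) (f (Inr x)))"
      using bspec[OF bspec[OF fe inl[OF that(1)]] inr[OF that(2)]] .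
    ultimately have "tangent (f (Inl v)) (f (Inr x))" by simp
    then show ?thesis using gd[OF inl[OF that(1)] inr[OF that(2)]] unfolding good_def L_def by auto
  qed
  define D where "D v = lor (f (Inl v))" for v
  have C: "Lf (lor (f (Inr a))) (lor (f (Inr b))) = -1 \<and> Lf (lor (f (Inr a))) (lor (f (Inr c))) = -1 \<and>
    Lf (lor (f (Inr b))) (lor (f (Inr c))) = -1 \<and>
    (\<exists>g. bij_betw g {..<6} V6 \<and>
      (\<forall>i<6. \<forall>j<6. i \<noteq> j \<longrightarrow> (Lf (D (g i)) (D (g j)) = -1 \<longleftrightarrow> cycle_edges 6 i j)))"
  proof (rule core[OF fin6 c6])
    show "Lf (lor (f (Inr a))) (lor (f (Inr a))) = 1" using Lself[OF inr[OF aV(1)]] unfolding L_def .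
    show "Lf (lor (f (Inr b))) (lor (f (Inr b))) = 1" using Lself[OF inr[OF aV(2)]] unfolding L_def .
    show "Lf (lor (f (Inr c))) (lor (f (Inr c))) = 1" using Lself[OF inr[OF aV(3)]] unfolding L_def .
    show "Lf (lor (f (Inr a))) (lor (f (Inr b))) \<le> -1" using Lle[OF inr[OF aV(1)] inr[OF aV(2)]] abc unfolding L_def by simp
    show "Lf (lor (f (Inr a))) (lor (f (Inr c))) \<le> -1" using Lle[OF inr[OF aV(1)] inr[OF aV(3)]] abc unfolding L_def by simp
    show "Lf (lor (f (Inr b))) (lor (f (Inr c))) \<le> -1" using Lle[OF inr[OF aV(2)] inr[OF aV(3)]] abc unfolding L_def by simp
    fix v assume v: "v \<in> V6"
    show "Lf (D v) (D v) = 1" using Lself[OF inl[OF v]] unfolding L_def D_def .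
    show "Lf (D v) (lor (f (Inr a))) = -1" using lr[OF v aV(1)] unfolding L_def D_def .
    show "Lf (D v) (lor (f (Inr b))) = -1" using lr[OF v aV(2)] unfolding L_def D_def .
    show "Lf (D v) (lor (f (Inr c))) = -1" using lr[OF v aV(3)] unfolding L_def D_def .
  next
    fix v w assume "v \<in> V6" "w \<in> V6" "v \<noteq> w"
    then show "Lf (D v) (D w) \<le> -1" using Lle[OF inl inl] unfolding L_def D_def by simp
  qed
  then obtain g where g: "bij_betw g {..<6} V6"
    and ge: "\<forall>i<6. \<forall>j<6. i \<noteq> j \<longrightarrow> (Lf (D (g i)) (D (g j)) = -1 \<longleftrightarrow> cycle_edges 6 i j)" by blast
  have L3: "L (Inr x) (Inr y) = -1" if "x \<in> V3" "y \<in> V3" "x \<noteq> y" for x y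
    using C that V3 Lsym unfolding L_def by auto
  have E3iff: "E3 x y \<longleftrightarrow> x \<noteq> y" if "x \<in> V3" "y \<in> V3" for x y
  proof (cases "x = y")
    case True then show ?thesis using s3 unfolding simple_graph_def by auto
  next
    case False
    have "tangent (f (Inr x)) (f (Inr y))"
      using tgI[OF inr[OF that(1)] inr[OF that(2)] _ inl[OF v0]] L3[OF that False] False by simp
    moreover have "(Inr x :: 'a + 'b) \<noteq> Inr y \<longrightarrow> (join_edges V6 E6 V3 E3 (Inr x) (Inr y) \<longleftrightarrow> tangent (f (Inr x)) (f (Inr y)))"
      using bspec[OF bspec[OF fe inr[OF that(1)]] inr[OF that(2)]] .
    ultimately have "E3 x y" using False by simp
    then show ?thesis using False by simp
  qed
  have gV: "g i \<in> V6" if "i < 6" for i using g that by (auto simp: bij_betw_def)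
  have gi: "g i \<noteq> g j" if "i < 6" "j < 6" "i \<noteq> j" for i j
    using g that unfolding bij_betw_def inj_on_def by auto
  have E6g: "E6 (g i) (g j) \<longleftrightarrow> cycle_edges 6 i j" if "i < 6" "j < 6" for i j
  proof (cases "i = j")
    case True then show ?thesis using s6 unfolding simple_graph_def cycle_edges_def by auto
  next
    case False
    have "(Inl (g i) :: 'a + 'b) \<noteq> Inl (g j) \<longrightarrow> (join_edges V6 E6 V3 E3 (Inl (g i)) (Inl (g j)) \<longleftrightarrow> tangent (f (Inl (g i))) (f (Inl (g j))))"
      using bspec[OF bspec[OF fe inl[OF gV[OF that(1)]]] inl[OF gV[OF that(2)]]] .
    then have "E6 (g i) (g j) \<longleftrightarrow> tangent (f (Inl (g i))) (f (Inl (g j)))"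
      using gi[OF that False] by simp
    also have "\<dots> \<longleftrightarrow> L (Inl (g i)) (Inl (g j)) = -1"
      by (rule tgI[OF inl[OF gV[OF that(1)]] inl[OF gV[OF that(2)]] _ inr[OF aV(1)]])
        (use gi[OF that False] in auto)
    also have "\<dots> \<longleftrightarrow> cycle_edges 6 i j" using ge that False unfolding L_def D_def by auto
    finally show ?thesis .
  qed
  define p where "p = inv_into {..<6} g"
  have pb: "bij_betw p V6 (cycle_verts 6)"
    unfolding p_def cycle_verts_def using bij_betw_inv_into[OF g] by (simp add: lessThan_atLeast0)
  have pe: "\<forall>x\<in>V6. \<forall>y\<in>V6. E6 x y \<longleftrightarrow> cycle_edges 6 (p x) (p y)"
  proof (intro ballI)
    fix x y assume "x \<in> V6" "y \<in> V6"
    then have px: "p x < 6" "g (p x) = x" "p y < 6" "g (p y) = y"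
      using g unfolding p_def bij_betw_def
      by (auto intro: inv_into_into f_inv_into_f)
    then show "E6 x y \<longleftrightarrow> cycle_edges 6 (p x) (p y)" using E6g[of "p x" "p y"] by simp
  qed
  obtain k0 where k0: "bij_betw k0 {0..<card V3} V3" using ex_bij_betw_nat_finite[OF fin3] by blast
  define q where "q = inv_into {0..<3} k0"
  have qb: "bij_betw q V3 (cycle_verts 3)"
    unfolding q_def cycle_verts_def using bij_betw_inv_into[OF k0] c3 by simp
  have qe: "\<forall>x\<in>V3. \<forall>y\<in>V3. E3 x y \<longleftrightarrow> cycle_edges 3 (q x) (q y)"
  proof (intro ballI)
    fix x y assume xy: "x \<in> V3" "y \<in> V3"
    have qx: "q x < 3" "q y < 3" using qb xy unfolding bij_betw_def cycle_verts_def by auto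
    have "q x = q y \<longleftrightarrow> x = y" using qb xy unfolding bij_betw_def inj_on_def by auto
    then show "E3 x y \<longleftrightarrow> cycle_edges 3 (q x) (q y)" using E3iff[OF xy] cycle3[OF qx] by simp
  qed
  show ?thesis using join_iso[OF pb qb pe qe] .
qed

theorem corollary3p9:
  fixes V6 :: "'a set" and E6 :: "'a \<Rightarrow> 'a \<Rightarrow> bool"
    and V3 :: "'b set" and E3 :: "'b \<Rightarrow> 'b \<Rightarrow> bool"
  assumes "simple_graph V6 E6" and "card V6 = 6"
    and "simple_graph V3 E3" and "card V3 = 3"
  shows "ball_packable (join_verts V6 V3) (join_edges V6 E6 V3 E3) \<longleftrightarrow>
         graph_iso (join_verts V6 V3) (join_edges V6 E6 V3 E3)
           (join_verts (cycle_verts 6) (cycle_verts 3))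
           (join_edges (cycle_verts 6) (cycle_edges 6) (cycle_verts 3) (cycle_edges 3))"
proof
  assume "ball_packable (join_verts V6 V3) (join_edges V6 E6 V3 E3)"
  then show "graph_iso (join_verts V6 V3) (join_edges V6 E6 V3 E3)
           (join_verts (cycle_verts 6) (cycle_verts 3))
           (join_edges (cycle_verts 6) (cycle_edges 6) (cycle_verts 3) (cycle_edges 3))"
    using forward assms by blast
next
  assume "graph_iso (join_verts V6 V3) (join_edges V6 E6 V3 E3)
           (join_verts (cycle_verts 6) (cycle_verts 3))
           (join_edges (cycle_verts 6) (cycle_edges 6) (cycle_verts 3) (cycle_edges 3))"
  then show "ball_packable (join_verts V6 V3) (join_edges V6 E6 V3 E3)"
    using transport C63_packable by blast
qed

end
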